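(* Let $L$ be a limit group over free products with set of elliptics $E_L$. (i) Let $u_1,u_2,u_3$ be nontrivial elements of $L$ such that at least one of them is not in $E_L$, and $[u_1,u_2]=1$, $[u_1,u_3]=1$. Then none of $u_1,u_2,u_3$ lies in $E_L$ and $[u_2,u_3]=1$. (ii) Let $A<L$ be a nontrivial abelian subgroup not contained in $E_L$. Then $A$ is contained in a unique maximal abelian subgroup of $L$, namely its centralizer $C(A)$, and $C(A)\cap E_L=\{1\}$. (iii) With $A$ as in (ii), $C(A)$ has index at most 2 in the normalizer $N(A)$; for every $\ell\in L\setminus N(A)$, $\ell C(A)\ell^{-1}\cap A=\{1\}$ (so $C(A)$ is almost malnormal); and if $[N(A):C(A)]=2$ then $N(A)$ is generated by $C(A)$ and an element of order 2 lying in $E_L$ that conjugates every element of $C(A)$ to its inverse.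
   Context: An element of a free product $A*B$ is elliptic if it lies in a conjugate of $A$ or of $B$. For a finitely generated group $G$ and groups $A_n,B_n$, a sequence of homomorphisms $h_n:G\to A_n*B_n$ is convergent if for every $g\in G$: either $h_n(g)=1$ for all large $n$ or $h_n(g)\ne1$ for all large $n$; and either $h_n(g)$ is elliptic for all large $n$ or non-elliptic for all large $n$. Its stable kernel is $K=\{g: h_n(g)=1\text{ for all large }n\}$; $L=G/K$ (with quotient $\eta$) is called a limit group over free products, and its set of elliptics is $E_L=\{\eta(g): h_n(g)\text{ elliptic for all large }n\}$. *)

theory Defs
  imports "HOL-Algebra.Algebra" "HOL-Library.Sublist"
begin

definition reduced_word :: "('b, 'm) monoid_scheme \<Rightarrow> 'b set \<Rightarrow> 'b set \<Rightarrow> 'b list \<Rightarrow> bool" where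
  "reduced_word P A B xs \<longleftrightarrow>
     (\<forall>x\<in>set xs. x \<in> (A \<union> B) \<and> x \<noteq> \<one>\<^bsub>P\<^esub>) \<and>
     (\<forall>i. Suc i < length xs \<longrightarrow>
        (xs ! i \<in> A \<and> xs ! Suc i \<in> B) \<or> (xs ! i \<in> B \<and> xs ! Suc i \<in> A))"

definition word_prod :: "('b, 'm) monoid_scheme \<Rightarrow> 'b list \<Rightarrow> 'b" where
  "word_prod P xs = foldr (\<lambda>x y. x \<otimes>\<^bsub>P\<^esub> y) xs \<one>\<^bsub>P\<^esub>"

definition is_free_product :: "('b, 'm) monoid_scheme \<Rightarrow> 'b set \<Rightarrow> 'b set \<Rightarrow> bool" where
  "is_free_product P A B \<longleftrightarrow>
     group P \<and> subgroup A P \<and> subgroup B P \<and>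
     generate P (A \<union> B) = carrier P \<and>
     (\<forall>xs. xs \<noteq> [] \<and> reduced_word P A B xs \<longrightarrow> word_prod P xs \<noteq> \<one>\<^bsub>P\<^esub>)"

definition elliptic :: "('b, 'm) monoid_scheme \<Rightarrow> 'b set \<Rightarrow> 'b set \<Rightarrow> 'b \<Rightarrow> bool" where
  "elliptic P A B x \<longleftrightarrow>
     (\<exists>p\<in>carrier P. \<exists>a\<in>A \<union> B. x = p \<otimes>\<^bsub>P\<^esub> a \<otimes>\<^bsub>P\<^esub> inv\<^bsub>P\<^esub> p)"

definition finitely_generated :: "('a, 'm) monoid_scheme \<Rightarrow> bool" where
  "finitely_generated G \<longleftrightarrow>
     (\<exists>S. finite S \<and> S \<subseteq> carrier G \<and> generate G S = carrier G)"

text \<open>A sequence h n : G \<rightarrow> A n * B n (realised as internal free products P n).\<close>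
definition convergent_seq ::
  "('a, 'm) monoid_scheme \<Rightarrow> (nat \<Rightarrow> ('b, 'k) monoid_scheme) \<Rightarrow> (nat \<Rightarrow> 'b set)
     \<Rightarrow> (nat \<Rightarrow> 'b set) \<Rightarrow> (nat \<Rightarrow> 'a \<Rightarrow> 'b) \<Rightarrow> bool" where
  "convergent_seq G P A B h \<longleftrightarrow>
     (\<forall>n. is_free_product (P n) (A n) (B n) \<and> h n \<in> hom G (P n)) \<and>
     (\<forall>g\<in>carrier G.
        ((\<forall>\<^sub>F n in sequentially. h n g = \<one>\<^bsub>P n\<^esub>) \<or>
         (\<forall>\<^sub>F n in sequentially. h n g \<noteq> \<one>\<^bsub>P n\<^esub>)) \<and>
        ((\<forall>\<^sub>F n in sequentially. elliptic (P n) (A n) (B n) (h n g)) \<or>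
         (\<forall>\<^sub>F n in sequentially. \<not> elliptic (P n) (A n) (B n) (h n g))))"

definition stable_kernel ::
  "('a, 'm) monoid_scheme \<Rightarrow> (nat \<Rightarrow> ('b, 'k) monoid_scheme) \<Rightarrow> (nat \<Rightarrow> 'a \<Rightarrow> 'b) \<Rightarrow> 'a set" where
  "stable_kernel G P h = {g \<in> carrier G. \<forall>\<^sub>F n in sequentially. h n g = \<one>\<^bsub>P n\<^esub>}"

definition limit_group ::
  "('a, 'm) monoid_scheme \<Rightarrow> (nat \<Rightarrow> ('b, 'k) monoid_scheme) \<Rightarrow> (nat \<Rightarrow> 'a \<Rightarrow> 'b) \<Rightarrow> 'a set monoid" where
  "limit_group G P h = G Mod (stable_kernel G P h)"

definition limit_elliptics ::
  "('a, 'm) monoid_scheme \<Rightarrow> (nat \<Rightarrow> ('b, 'k) monoid_scheme) \<Rightarrow> (nat \<Rightarrow> 'b set)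
     \<Rightarrow> (nat \<Rightarrow> 'b set) \<Rightarrow> (nat \<Rightarrow> 'a \<Rightarrow> 'b) \<Rightarrow> 'a set set" where
  "limit_elliptics G P A B h =
     {stable_kernel G P h #>\<^bsub>G\<^esub> g | g. g \<in> carrier G \<and>
        (\<forall>\<^sub>F n in sequentially. elliptic (P n) (A n) (B n) (h n g))}"

definition abelian_set :: "('c, 'm) monoid_scheme \<Rightarrow> 'c set \<Rightarrow> bool" where
  "abelian_set L S \<longleftrightarrow> (\<forall>x\<in>S. \<forall>y\<in>S. x \<otimes>\<^bsub>L\<^esub> y = y \<otimes>\<^bsub>L\<^esub> x)"

definition centralizer :: "('c, 'm) monoid_scheme \<Rightarrow> 'c set \<Rightarrow> 'c set" where
  "centralizer L S = {x \<in> carrier L. \<forall>a\<in>S. x \<otimes>\<^bsub>L\<^esub> a = a \<otimes>\<^bsub>L\<^esub> x}"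

definition max_abelian_subgroup :: "('c, 'm) monoid_scheme \<Rightarrow> 'c set \<Rightarrow> bool" where
  "max_abelian_subgroup L M \<longleftrightarrow> subgroup M L \<and> abelian_set L M \<and>
     (\<forall>M'. subgroup M' L \<and> abelian_set L M' \<and> M \<subseteq> M' \<longrightarrow> M' = M)"

definition commutator :: "('c, 'm) monoid_scheme \<Rightarrow> 'c \<Rightarrow> 'c \<Rightarrow> 'c" where
  "commutator L x y = x \<otimes>\<^bsub>L\<^esub> y \<otimes>\<^bsub>L\<^esub> inv\<^bsub>L\<^esub> x \<otimes>\<^bsub>L\<^esub> inv\<^bsub>L\<^esub> y"

end

theory Submission
  imports Defs
begin

fun alt :: "('b \<Rightarrow> bool) \<Rightarrow> 'b list \<Rightarrow> bool" where
  "alt s [] = True" | "alt s [x] = True" | "alt s (x#y#xs) = (s x \<noteq> s y \<and> alt s (y#xs))"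
lemma alt_Cons: "alt s (x#xs) \<longleftrightarrow> alt s xs \<and> (xs \<noteq> [] \<longrightarrow> s x \<noteq> s (hd xs))"
  by (cases xs) auto
lemma alt_append: "alt s (xs @ ys) \<longleftrightarrow> alt s xs \<and> alt s ys \<and> (xs \<noteq> [] \<longrightarrow> ys \<noteq> [] \<longrightarrow> s (last xs) \<noteq> s (hd ys))"
  by (induction xs) (auto simp: alt_Cons)
lemma alt_nth: "alt s xs \<longleftrightarrow> (\<forall>i. Suc i < length xs \<longrightarrow> s (xs!i) \<noteq> s (xs ! Suc i))"
proof (induction xs)
  case (Cons x xs)
  show ?case
  proof
    assume "alt s (x # xs)"
    with Cons show "\<forall>i. Suc i < length (x # xs) \<longrightarrow> s ((x # xs) ! i) \<noteq> s ((x # xs) ! Suc i)"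
      apply (intro allI impI) subgoal for i by (cases i) (auto simp: alt_Cons hd_conv_nth) done
  next
    assume h: "\<forall>i. Suc i < length (x # xs) \<longrightarrow> s ((x # xs) ! i) \<noteq> s ((x # xs) ! Suc i)"
    have "xs \<noteq> [] \<longrightarrow> s x \<noteq> s (hd xs)" using h[rule_format, of 0] by (auto simp: hd_conv_nth)
    moreover have "\<forall>i. Suc i < length xs \<longrightarrow> s (xs ! i) \<noteq> s (xs ! Suc i)"
      using h[rule_format, of "Suc _"] by simp
    ultimately show "alt s (x # xs)" using Cons by (simp add: alt_Cons)
  qed
qed simp
lemma alt_rev: "alt s (rev xs) = alt s xs"
  by (induction xs) (auto simp: alt_append alt_Cons hd_rev last_rev)

lemma comm_rep: "w @ cs = cs @ w \<Longrightarrow> length w = k * length cs \<Longrightarrow> w = concat (replicate k cs)"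
proof (induction k arbitrary: w)
  case 0 then show ?case by simp
next
  case (Suc k)
  have "take (length cs) (w @ cs) = take (length cs) (cs @ w)" using Suc.prems by simp
  then have tw: "take (length cs) w = cs" using Suc.prems(2) by simp
  define w' where "w' = drop (length cs) w"
  have w: "w = cs @ w'" unfolding w'_def using tw by (metis append_take_drop_id)
  then have "cs @ w' @ cs = cs @ cs @ w'" using Suc.prems(1) by simp
  then have "w' @ cs = cs @ w'" by simp
  moreover have "length w' = k * length cs" using Suc.prems(2) w by simp
  ultimately show ?case using Suc.IH w by simp
qed

context group
begin

lemma cancel_simps:
  "x \<in> carrier G \<Longrightarrow> y \<in> carrier G \<Longrightarrow> inv x \<otimes> (x \<otimes> y) = y"
  "x \<in> carrier G \<Longrightarrow> y \<in> carrier G \<Longrightarrow> x \<otimes> (inv x \<otimes> y) = y"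
  by (simp_all flip: m_assoc)

definition cj where "cj w z = w \<otimes> z \<otimes> inv w"

lemma cj_closed[simp]: "w \<in> carrier G \<Longrightarrow> z \<in> carrier G \<Longrightarrow> cj w z \<in> carrier G"
  by (simp add: cj_def)
lemma cj_mult: "w \<in> carrier G \<Longrightarrow> a \<in> carrier G \<Longrightarrow> b \<in> carrier G \<Longrightarrow> cj w (a \<otimes> b) = cj w a \<otimes> cj w b"
  by (simp add: cj_def m_assoc cancel_simps)
lemma cj_inv: assumes "w \<in> carrier G" "a \<in> carrier G" shows "cj w (inv a) = inv (cj w a)"
proof -
  have "cj w (inv a) \<otimes> cj w a = \<one>" unfolding cj_def using assms by (simp add: m_assoc cancel_simps)
  then show ?thesis using inv_equality[of "cj w (inv a)" "cj w a"] assms by (simp add: cj_def)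
qed
lemma cj_one[simp]: "w \<in> carrier G \<Longrightarrow> cj w \<one> = \<one>"
  by (simp add: cj_def)
lemma cj_cj_inv[simp]: "w \<in> carrier G \<Longrightarrow> a \<in> carrier G \<Longrightarrow> cj (inv w) (cj w a) = a"
  by (simp add: cj_def m_assoc cancel_simps)
lemma cj_inv_cj[simp]: "w \<in> carrier G \<Longrightarrow> a \<in> carrier G \<Longrightarrow> cj w (cj (inv w) a) = a"
  by (simp add: cj_def m_assoc cancel_simps)
lemma cj_inj: assumes "w \<in> carrier G" "a \<in> carrier G" "b \<in> carrier G" shows "cj w a = cj w b \<longleftrightarrow> a = b"
proof
  assume h: "cj w a = cj w b"
  have "a = cj (inv w) (cj w a)" using assms by simp
  also have "\<dots> = cj (inv w) (cj w b)" using h by simp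
  also have "\<dots> = b" using assms by simp
  finally show "a = b" .
qed simp

lemma mult_inv_eq_one: assumes "x \<in> carrier G" "y \<in> carrier G" shows "x \<otimes> inv y = \<one> \<longleftrightarrow> x = y"
proof
  assume h: "x \<otimes> inv y = \<one>"
  have "x = x \<otimes> inv y \<otimes> y" using assms by (simp add: m_assoc)
  then show "x = y" using h assms by simp
qed (use assms in simp)

lemma cj_fix: assumes "w \<in> carrier G" "a \<in> carrier G" shows "cj w a = a \<longleftrightarrow> w \<otimes> a = a \<otimes> w"
proof -
  have "cj w a = a \<longleftrightarrow> (w \<otimes> a) \<otimes> inv w = a" by (simp add: cj_def)
  also have "\<dots> \<longleftrightarrow> (w \<otimes> a) \<otimes> inv w \<otimes> w = a \<otimes> w" using assms by simp
  also have "\<dots> \<longleftrightarrow> w \<otimes> a = a \<otimes> w" using assms by (simp add: m_assoc)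
  finally show ?thesis .
qed
lemma cj_comm: "w \<in> carrier G \<Longrightarrow> a \<in> carrier G \<Longrightarrow> b \<in> carrier G \<Longrightarrow>
   (cj w a \<otimes> cj w b = cj w b \<otimes> cj w a) \<longleftrightarrow> a \<otimes> b = b \<otimes> a"
  by (simp add: cj_mult[symmetric] cj_inj)
lemma cj_cj: "w \<in> carrier G \<Longrightarrow> v \<in> carrier G \<Longrightarrow> a \<in> carrier G \<Longrightarrow> cj w (cj v a) = cj (w \<otimes> v) a"
  by (simp add: cj_def m_assoc inv_mult_group)
lemma cj_eq_one: "w \<in> carrier G \<Longrightarrow> a \<in> carrier G \<Longrightarrow> cj w a = \<one> \<longleftrightarrow> a = \<one>"
  using cj_inj[of w a \<one>] by simp

lemma cj_pow_nat: "w \<in> carrier G \<Longrightarrow> a \<in> carrier G \<Longrightarrow> cj w (a [^] (n::nat)) = (cj w a) [^] n"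
  by (induction n) (simp_all add: cj_mult)

lemma cj_pow_int: assumes "w \<in> carrier G" "a \<in> carrier G" shows "cj w (a [^] (q::int)) = (cj w a) [^] q"
proof (cases q rule: int_cases2)
  case (nonneg n) then show ?thesis using assms cj_pow_nat by (simp add: int_pow_int)
next
  case (nonpos n) then show ?thesis using assms cj_pow_nat cj_inv by (simp add: int_pow_neg_int)
qed

end

locale fp = group P for P :: "('b, 'm) monoid_scheme" (structure) +
  fixes A B
  assumes isfp: "is_free_product P A B"
begin
lemma subA: "subgroup A P" and subB: "subgroup B P"
  and gen: "generate P (A \<union> B) = carrier P"
  and nontriv: "\<And>xs. xs \<noteq> [] \<Longrightarrow> reduced_word P A B xs \<Longrightarrow> word_prod P xs \<noteq> \<one>"
  using isfp unfolding is_free_product_def by blast+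

abbreviation wp where "wp \<equiv> word_prod P"

lemma wp_Nil[simp]: "wp [] = \<one>" and wp_Cons[simp]: "wp (x#xs) = x \<otimes> wp xs"
  by (simp_all add: word_prod_def)

lemma wp_closed[simp]: "set xs \<subseteq> carrier P \<Longrightarrow> wp xs \<in> carrier P"
  by (induction xs) auto

lemma wp_append: "set xs \<subseteq> carrier P \<Longrightarrow> set ys \<subseteq> carrier P \<Longrightarrow> wp (xs @ ys) = wp xs \<otimes> wp ys"
  by (induction xs) (auto simp: m_assoc)

lemma A_car: "x \<in> A \<Longrightarrow> x \<in> carrier P" using subA subgroup.subset by blast
lemma B_car: "x \<in> B \<Longrightarrow> x \<in> carrier P" using subB subgroup.subset by blast

lemma AB_inter: assumes "x \<in> A" "x \<in> B" shows "x = \<one>"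
proof (rule ccontr)
  assume ne: "x \<noteq> \<one>"
  have xc: "x \<in> carrier P" using assms A_car by blast
  have ix: "inv x \<in> B" using subgroup.m_inv_closed[OF subB assms(2)] .
  have "inv x \<noteq> \<one>" using ne xc by simp
  then have "reduced_word P A B [x, inv x]"
    unfolding reduced_word_def
  proof (intro conjI allI impI)
    fix i assume "Suc i < length [x, inv x]"
    then have "i = 0" by simp
    then show "[x, inv x] ! i \<in> A \<and> [x, inv x] ! Suc i \<in> B \<or> [x, inv x] ! i \<in> B \<and> [x, inv x] ! Suc i \<in> A"
      using assms ix by simp
  qed (use assms ix ne \<open>inv x \<noteq> \<one>\<close> in auto)
  moreover have "wp [x, inv x] = \<one>" using xc by simp
  ultimately show False using nontriv by blast
qed

definition letter where "letter x \<longleftrightarrow> x \<in> A \<union> B \<and> x \<noteq> \<one>"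

definition red where "red xs \<longleftrightarrow> (\<forall>x\<in>set xs. letter x) \<and> alt (\<lambda>x. x \<in> A) xs"

lemma red_iff: "reduced_word P A B xs \<longleftrightarrow> red xs"
proof -
  have key: "letter u \<Longrightarrow> letter v \<Longrightarrow> ((u \<in> A \<and> v \<in> B) \<or> (u \<in> B \<and> v \<in> A)) \<longleftrightarrow> ((u \<in> A) \<noteq> (v \<in> A))" for u v
    unfolding letter_def using AB_inter by blast
  have l: "(\<forall>x\<in>set xs. x \<in> A \<union> B \<and> x \<noteq> \<one>) \<longleftrightarrow> (\<forall>x\<in>set xs. letter x)"
    by (simp add: letter_def)
  show ?thesis
  proof
    assume h: "reduced_word P A B xs"
    then have L: "\<forall>x\<in>set xs. letter x" unfolding reduced_word_def l by blast
    have "\<forall>i. Suc i < length xs \<longrightarrow> (xs!i \<in> A) \<noteq> (xs ! Suc i \<in> A)"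
    proof (intro allI impI)
      fix i assume i: "Suc i < length xs"
      then have "letter (xs!i)" "letter (xs ! Suc i)" using L by auto
      moreover have "(xs ! i \<in> A \<and> xs ! Suc i \<in> B) \<or> (xs ! i \<in> B \<and> xs ! Suc i \<in> A)"
        using h i unfolding reduced_word_def by blast
      ultimately show "(xs!i \<in> A) \<noteq> (xs ! Suc i \<in> A)" using key by blast
    qed
    then show "red xs" unfolding red_def alt_nth using L by blast
  next
    assume h: "red xs"
    then have L: "\<forall>x\<in>set xs. letter x" unfolding red_def by blast
    have "\<forall>i. Suc i < length xs \<longrightarrow> (xs ! i \<in> A \<and> xs ! Suc i \<in> B) \<or> (xs ! i \<in> B \<and> xs ! Suc i \<in> A)"
    proof (intro allI impI)
      fix i assume i: "Suc i < length xs"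
      then have "letter (xs!i)" "letter (xs ! Suc i)" using L by auto
      moreover have "(xs!i \<in> A) \<noteq> (xs ! Suc i \<in> A)" using h i unfolding red_def alt_nth by blast
      ultimately show "(xs ! i \<in> A \<and> xs ! Suc i \<in> B) \<or> (xs ! i \<in> B \<and> xs ! Suc i \<in> A)" using key by blast
    qed
    then show "reduced_word P A B xs" unfolding reduced_word_def l using L by blast
  qed
qed


lemma letter_car: "letter x \<Longrightarrow> x \<in> carrier P"
  unfolding letter_def using A_car B_car by blast

lemma red_Nil[simp]: "red []" by (simp add: red_def)

lemma red_Cons: "red (x#xs) \<longleftrightarrow> letter x \<and> red xs \<and> (xs \<noteq> [] \<longrightarrow> (x \<in> A) \<noteq> (hd xs \<in> A))"
  unfolding red_def by (auto simp: alt_Cons)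

lemma red_append: "red (xs@ys) \<longleftrightarrow> red xs \<and> red ys \<and> (xs \<noteq> [] \<longrightarrow> ys \<noteq> [] \<longrightarrow> (last xs \<in> A) \<noteq> (hd ys \<in> A))"
  unfolding red_def alt_append by auto

lemma red_car: "red xs \<Longrightarrow> set xs \<subseteq> carrier P"
  unfolding red_def using letter_car by blast

lemma letter_inv: "letter x \<Longrightarrow> letter (inv x) \<and> (inv x \<in> A \<longleftrightarrow> x \<in> A)"
proof -
  assume l: "letter x"
  then have xc: "x \<in> carrier P" by (rule letter_car)
  have "inv x \<in> A \<longleftrightarrow> x \<in> A"
    using subgroup.m_inv_closed[OF subA, of x] subgroup.m_inv_closed[OF subA, of "inv x"] xc by auto
  moreover have "x \<in> B \<Longrightarrow> inv x \<in> B" using subgroup.m_inv_closed[OF subB, of x] by simp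
  moreover have "inv x \<noteq> \<one>" using l xc unfolding letter_def by simp
  ultimately show ?thesis using l unfolding letter_def by blast
qed

lemma letter_mult: assumes "letter u" "letter v" "(u \<in> A) = (v \<in> A)" "u \<otimes> v \<noteq> \<one>"
  shows "letter (u \<otimes> v) \<and> (u \<otimes> v \<in> A) = (u \<in> A)"
proof (cases "u \<in> A")
  case True
  then have "v \<in> A" using assms by simp
  then have "u \<otimes> v \<in> A" using subgroup.m_closed[OF subA True] by simp
  then show ?thesis using True assms(4) unfolding letter_def by simp
next
  case False
  then have "u \<in> B" "v \<in> B" using assms unfolding letter_def by auto
  then have uv: "u \<otimes> v \<in> B" using subgroup.m_closed[OF subB] by simp
  then have "u \<otimes> v \<notin> A" using AB_inter assms(4) by blast
  then show ?thesis using uv False assms(4) unfolding letter_def by simp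
qed

definition invw where "invw xs = rev (map (\<lambda>x. inv x) xs)"

lemma invw_Nil[simp]: "invw [] = []" by (simp add: invw_def)
lemma invw_Cons: "invw (x#xs) = invw xs @ [inv x]" by (simp add: invw_def)
lemma invw_append: "invw (xs@ys) = invw ys @ invw xs" by (simp add: invw_def)
lemma length_invw[simp]: "length (invw xs) = length xs" by (simp add: invw_def)

lemma invw_Nil_iff[simp]: "invw xs = [] \<longleftrightarrow> xs = []" by (simp add: invw_def)

lemma invw_car: "set xs \<subseteq> carrier P \<Longrightarrow> set (invw xs) \<subseteq> carrier P"
  by (auto simp: invw_def)

lemma wp_invw: "set xs \<subseteq> carrier P \<Longrightarrow> wp (invw xs) = inv (wp xs)"
proof (induction xs)
  case (Cons x xs)
  then have xc: "x \<in> carrier P" and xsc: "set xs \<subseteq> carrier P" by auto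
  have "wp (invw (x#xs)) = wp (invw xs) \<otimes> wp [inv x]"
    unfolding invw_Cons using wp_append[OF invw_car[OF xsc], of "[inv x]"] xc by simp
  also have "\<dots> = inv (wp xs) \<otimes> inv x" using Cons xc by simp
  also have "\<dots> = inv (wp (x#xs))" using xc xsc by (simp add: inv_mult_group)
  finally show ?case .
qed (simp)

lemma red_invw: "red xs \<Longrightarrow> red (invw xs)"
proof -
  assume r: "red xs"
  have "alt (\<lambda>x. x \<in> A) (map (\<lambda>x. inv x) xs) = alt (\<lambda>x. x \<in> A) xs"
    using r unfolding red_def
  proof (induction xs)
    case (Cons x xs)
    then show ?case using letter_inv by (cases xs) (auto simp: alt_Cons)
  qed simp
  then show ?thesis using r letter_inv unfolding red_def invw_def by (simp add: alt_rev)
qed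

lemma last_invw: "xs \<noteq> [] \<Longrightarrow> last (invw xs) = inv (hd xs)"
  by (cases xs) (auto simp: invw_Cons)
lemma hd_invw: "xs \<noteq> [] \<Longrightarrow> hd (invw xs) = inv (last xs)"
  by (simp add: invw_def hd_rev last_map)

definition mul where "mul g ys = (if g = \<one> then ys else (case ys of [] \<Rightarrow> [g]
   | y#ys' \<Rightarrow> if (g \<in> A) \<noteq> (y \<in> A) then g#ys else if g \<otimes> y = \<one> then ys' else (g \<otimes> y) # ys'))"

lemma mul_ok: assumes g: "g \<in> A \<union> B" and r: "red ys" shows "red (mul g ys) \<and> wp (mul g ys) = g \<otimes> wp ys"
proof -
  have gc: "g \<in> carrier P" using g A_car B_car by blast
  have yc: "set ys \<subseteq> carrier P" using r red_car by blast
  show ?thesis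
  proof (cases "g = \<one>")
    case True then show ?thesis using r yc by (simp add: mul_def)
  next
    case gne: False
    then have lg: "letter g" using g unfolding letter_def by simp
    show ?thesis
    proof (cases ys)
      case Nil then show ?thesis using gne lg gc by (simp add: mul_def red_Cons)
    next
      case (Cons y ys')
      have ly: "letter y" and rys': "red ys'" and sy: "ys' \<noteq> [] \<longrightarrow> (y \<in> A) \<noteq> (hd ys' \<in> A)"
        using r Cons by (auto simp: red_Cons)
      have yc1: "y \<in> carrier P" and yc2: "set ys' \<subseteq> carrier P" using yc Cons by auto
      show ?thesis
      proof (cases "(g \<in> A) \<noteq> (y \<in> A)")
        case True then show ?thesis using gne Cons r lg by (simp add: mul_def red_Cons)
      next
        case same: False
        show ?thesis
        proof (cases "g \<otimes> y = \<one>")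
          case True
          have "wp ys' = g \<otimes> (y \<otimes> wp ys')"
            using True gc yc1 yc2 by (simp flip: m_assoc)
          then show ?thesis using gne same True Cons rys' by (simp add: mul_def)
        next
          case False
          have lgy: "letter (g \<otimes> y) \<and> (g \<otimes> y \<in> A) = (g \<in> A)" using letter_mult[OF lg ly] same False by simp
          then have "red ((g \<otimes> y) # ys')" using rys' sy same by (simp add: red_Cons)
          moreover have "(g \<otimes> y) \<otimes> wp ys' = g \<otimes> (y \<otimes> wp ys')" using gc yc1 yc2 by (simp add: m_assoc)
          ultimately show ?thesis using gne same False Cons by (simp add: mul_def)
        qed
      qed
    qed
  qed
qed

definition muls where "muls xs ys = foldr mul xs ys"

lemma muls_ok: assumes "set xs \<subseteq> A \<union> B" "red ys" shows "red (muls xs ys) \<and> wp (muls xs ys) = wp xs \<otimes> wp ys"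
  using assms
proof (induction xs)
  case Nil then show ?case using red_car by (simp add: muls_def)
next
  case (Cons x xs)
  then have ih: "red (muls xs ys) \<and> wp (muls xs ys) = wp xs \<otimes> wp ys" by simp
  have "muls (x#xs) ys = mul x (muls xs ys)" by (simp add: muls_def)
  moreover have xc: "x \<in> carrier P" using Cons.prems A_car B_car by auto
  moreover have "set xs \<subseteq> carrier P" using Cons.prems A_car B_car by auto
  moreover have "set ys \<subseteq> carrier P" using Cons.prems red_car by auto
  ultimately show ?case using mul_ok[of x "muls xs ys"] ih Cons.prems by (simp add: m_assoc)
qed

lemma nf_ex: assumes "x \<in> carrier P" shows "\<exists>xs. red xs \<and> wp xs = x"
proof -
  have "x \<in> generate P (A \<union> B)" using assms gen by simp
  then show ?thesis
  proof (induction x rule: generate.induct)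
    case one then show ?case by (intro exI[of _ "[]"]) simp
  next
    case (incl h) then show ?case using mul_ok[of h "[]"] A_car B_car by (intro exI[of _ "mul h []"]) auto
  next
    case (inv h)
    then have "inv h \<in> A \<union> B" using subgroup.m_inv_closed[OF subA] subgroup.m_inv_closed[OF subB] by blast
    moreover have "inv h \<in> carrier P" using inv A_car B_car by blast
    ultimately show ?case using mul_ok[of "inv h" "[]"] by (intro exI[of _ "mul (inv h) []"]) auto
  next
    case (eng h1 h2)
    then obtain xs1 xs2 where "red xs1" "wp xs1 = h1" "red xs2" "wp xs2 = h2" by blast
    moreover have "set xs1 \<subseteq> A \<union> B" using \<open>red xs1\<close> unfolding red_def letter_def by blast
    ultimately show ?case using muls_ok[of xs1 xs2] by blast
  qed
qed

lemma nf_uniq: "red xs \<Longrightarrow> red ys \<Longrightarrow> wp xs = wp ys \<Longrightarrow> xs = ys"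
proof (induction xs arbitrary: ys)
  case Nil
  show ?case
  proof (rule ccontr)
    assume "[] \<noteq> ys"
    then show False using nontriv[of ys] Nil red_iff by simp
  qed
next
  case (Cons x xs)
  have rx: "red (x#xs)" by fact
  have lx: "letter x" and rxs: "red xs" and sx: "xs \<noteq> [] \<longrightarrow> (x \<in> A) \<noteq> (hd xs \<in> A)"
    using Cons.prems by (auto simp: red_Cons)
  have xc: "x \<in> carrier P" using lx letter_car by blast
  have xsc: "set xs \<subseteq> carrier P" using rxs red_car by blast
  show ?case
  proof (cases ys)
    case Nil
    then show ?thesis using nontriv[of "x#xs"] Cons.prems red_iff by simp
  next
    case (Cons y ys')
    have ly: "letter y" and rys: "red ys'" and sy: "ys' \<noteq> [] \<longrightarrow> (y \<in> A) \<noteq> (hd ys' \<in> A)"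
      using Cons \<open>red ys\<close> by (auto simp: red_Cons)
    have yc: "y \<in> carrier P" using ly letter_car by blast
    have ysc: "set ys' \<subseteq> carrier P" using rys red_car by blast
    have eq: "x \<otimes> wp xs = y \<otimes> wp ys'" using Cons \<open>wp (x#xs) = wp ys\<close> by simp
    show ?thesis
    proof (cases "x = y")
      case True
      then have "wp xs = wp ys'" using eq xc xsc ysc by simp
      then show ?thesis using Cons.IH[OF rxs rys] True Cons by simp
    next
      case xy: False
      have rix: "red (invw xs)" using rxs red_invw by blast
      have lix: "letter (inv x) \<and> (inv x \<in> A) = (x \<in> A)" using letter_inv[OF lx] by simp
      have key: "inv (wp xs) \<otimes> (inv x \<otimes> y) \<otimes> wp ys' = \<one>"
      proof -
        have "inv (wp xs) \<otimes> (inv x \<otimes> y) \<otimes> wp ys' = inv (x \<otimes> wp xs) \<otimes> (y \<otimes> wp ys')"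
          using xc yc xsc ysc by (simp add: inv_mult_group m_assoc)
        also have "\<dots> = \<one>" using eq yc ysc by simp
        finally show ?thesis .
      qed
      have key': "inv (wp xs) \<otimes> (inv x \<otimes> (y \<otimes> wp ys')) = \<one>"
        using key xc yc xsc ysc by (simp add: m_assoc)
      have junc: "xs \<noteq> [] \<Longrightarrow> (last (invw xs) \<in> A) = (hd xs \<in> A)"
        using letter_inv[of "hd xs"] rxs unfolding red_def by (simp add: last_invw)
      show ?thesis
      proof (cases "(x \<in> A) = (y \<in> A)")
        case True
        have ne: "inv x \<otimes> y \<noteq> \<one>"
        proof
          assume "inv x \<otimes> y = \<one>"
          then have "y = x" using xc yc by (metis inv_comm inv_equality inv_inv inv_closed)
          then show False using xy by simp
        qed
        have lz: "letter (inv x \<otimes> y) \<and> (inv x \<otimes> y \<in> A) = (x \<in> A)"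
          using letter_mult[of "inv x" y] lix ly True ne by simp
        let ?W = "invw xs @ [inv x \<otimes> y] @ ys'"
        have "red ?W" using rix rys lz sy True sx junc
          by (simp add: red_append red_Cons)
        moreover have "wp ?W = \<one>" using key' rix rys red_car xc yc
          by (simp add: wp_append wp_invw[OF xsc] m_assoc)
        ultimately show ?thesis using nontriv red_iff by simp
      next
        case False
        let ?W = "invw xs @ [inv x, y] @ ys'"
        have "red ?W" using rix rys lix ly sy False sx junc
          by (simp add: red_append red_Cons)
        moreover have "wp ?W = \<one>" using key' rix rys red_car xc yc
          by (simp add: wp_append wp_invw[OF xsc] m_assoc)
        ultimately show ?thesis using nontriv red_iff by simp
      qed
    qed
  qed
qed


definition nf where "nf x = (THE xs. red xs \<and> wp xs = x)"

lemma nf: assumes "x \<in> carrier P" shows "red (nf x)" "wp (nf x) = x"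
proof -
  obtain xs where "red xs" "wp xs = x" using nf_ex[OF assms] by blast
  then have "red (nf x) \<and> wp (nf x) = x"
    unfolding nf_def
  proof (intro theI[of "\<lambda>xs. red xs \<and> wp xs = x" xs])
    show "red xs \<and> wp xs = x" using \<open>red xs\<close> \<open>wp xs = x\<close> by simp
    fix ys assume "red ys \<and> wp ys = x" then show "ys = xs" using nf_uniq[of ys xs] \<open>red xs\<close> \<open>wp xs = x\<close> by simp
  qed
  then show "red (nf x)" "wp (nf x) = x" by auto
qed

lemma nf_eq: "red xs \<Longrightarrow> nf (wp xs) = xs"
  using nf[of "wp xs"] nf_uniq red_car wp_closed by metis

lemma nf_one[simp]: "nf \<one> = []"
  using nf_eq[of "[]"] by simp

lemma nf_inv: "x \<in> carrier P \<Longrightarrow> nf (inv x) = invw (nf x)"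
  using nf_eq[OF red_invw[OF nf(1)]] wp_invw[OF red_car[OF nf(1)]] nf(2) by metis

lemma nf_Nil_iff: "x \<in> carrier P \<Longrightarrow> nf x = [] \<longleftrightarrow> x = \<one>"
  using nf(2) by fastforce

lemma letter_AB: "letter x \<Longrightarrow> x \<in> A \<or> x \<in> B" unfolding letter_def by blast

lemma red_hd_notA: "red (x#xs) \<Longrightarrow> x \<in> A \<Longrightarrow> xs \<noteq> [] \<Longrightarrow> hd xs \<notin> A"
  by (simp add: red_Cons)

definition CR where "CR c \<longleftrightarrow> c \<in> carrier P \<and> length (nf c) \<ge> 2 \<and> (hd (nf c) \<in> A) \<noteq> (last (nf c) \<in> A)"

lemma conj_cr: "x \<in> carrier P \<Longrightarrow> \<exists>w\<in>carrier P. \<exists>c. x = w \<otimes> c \<otimes> inv w \<and> (c \<in> A \<union> B \<or> CR c)"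
proof (induction "length (nf x)" arbitrary: x rule: less_induct)
  case less
  have xc: "x \<in> carrier P" by fact
  have rx: "red (nf x)" and wx: "wp (nf x) = x" using nf[OF xc] by auto
  show ?case
  proof (cases "length (nf x) \<le> 1")
    case True
    have "x \<in> A \<union> B"
    proof (cases "nf x")
      case Nil then show ?thesis using wx subgroup.one_closed[OF subA] by auto
    next
      case (Cons l ys)
      then have "ys = []" using True by simp
      then show ?thesis using Cons wx rx letter_car[of l] by (auto simp: red_Cons letter_def)
    qed
    then show ?thesis using xc by (intro bexI[of _ \<one>] exI[of _ x]) auto
  next
    case len: False
    show ?thesis
    proof (cases "(hd (nf x) \<in> A) \<noteq> (last (nf x) \<in> A)")
      case True
      then have "CR x" using xc len unfolding CR_def by simp
      then show ?thesis using xc by (intro bexI[of _ \<one>] exI[of _ x]) auto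
    next
      case same: False
      obtain x1 ys where e1: "nf x = x1 # ys" using len by (cases "nf x") auto
      then have "ys \<noteq> []" using len by auto
      then obtain mid xn where e2: "ys = mid @ [xn]" by (metis rev_exhaust)
      have e: "nf x = x1 # mid @ [xn]" using e1 e2 by simp
      have rr: "red ([x1] @ mid @ [xn])" using rx e by simp
      have l1: "letter x1" and ln: "letter xn" and rmid: "red mid"
        and j2: "mid \<noteq> [] \<longrightarrow> (last mid \<in> A) \<noteq> (xn \<in> A)"
        using rr by (auto simp: red_append red_Cons)
      have s1: "(x1 \<in> A) = (xn \<in> A)" using same e by simp
      have x1c: "x1 \<in> carrier P" and xnc: "xn \<in> carrier P" using l1 ln letter_car by auto
      have midc: "set mid \<subseteq> carrier P" using rmid red_car by auto
      have xeq: "x = x1 \<otimes> wp mid \<otimes> xn"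
        using wx e x1c xnc midc by (simp add: wp_append m_assoc)
      define x' where "x' = wp mid \<otimes> (xn \<otimes> x1)"
      have x'c: "x' \<in> carrier P" unfolding x'_def using midc x1c xnc by simp
      have xx': "x = x1 \<otimes> x' \<otimes> inv x1"
        unfolding x'_def xeq using midc x1c xnc by (simp add: m_assoc)
      have "length (nf x') < length (nf x)"
      proof (cases "xn \<otimes> x1 = \<one>")
        case True
        then have "x' = wp mid" unfolding x'_def using midc by simp
        then show ?thesis using nf_eq[OF rmid] e by simp
      next
        case False
        have lz: "letter (xn \<otimes> x1) \<and> (xn \<otimes> x1 \<in> A) = (xn \<in> A)"
          using letter_mult[OF ln l1] s1 False by simp
        have "red (mid @ [xn \<otimes> x1])" using rmid lz j2 by (simp add: red_append red_Cons)
        moreover have "wp (mid @ [xn \<otimes> x1]) = x'" unfolding x'_def using midc x1c xnc by (simp add: wp_append)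
        ultimately have "nf x' = mid @ [xn \<otimes> x1]" using nf_eq by metis
        then show ?thesis using e by simp
      qed
      then obtain w c where w: "w \<in> carrier P" and c: "x' = w \<otimes> c \<otimes> inv w" "c \<in> A \<union> B \<or> CR c"
        using less.hyps[OF _ x'c] by blast
      have cc: "c \<in> carrier P" using c(2) A_car B_car CR_def by blast
      have "x = (x1 \<otimes> w) \<otimes> c \<otimes> inv (x1 \<otimes> w)"
        using xx' c(1) w x1c cc by (simp add: m_assoc inv_mult_group)
      then show ?thesis using c(2) w x1c by (intro bexI[of _ "x1 \<otimes> w"]) auto
    qed
  qed
qed

lemma stripR: assumes "red xs" "xs \<noteq> [] \<longrightarrow> hd xs \<notin> A"
  shows "\<exists>\<beta> mid. \<beta> \<in> A \<and> red mid \<and> wp xs = wp mid \<otimes> \<beta> \<and> (mid \<noteq> [] \<longrightarrow> hd mid \<notin> A \<and> last mid \<notin> A)"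
proof (cases xs rule: rev_cases)
  case Nil then show ?thesis using subgroup.one_closed[OF subA] by (intro exI[of _ \<one>] exI[of _ "[]"]) auto
next
  case (snoc mid' xn)
  have rm: "red mid'" and ln: "letter xn" and j: "mid' \<noteq> [] \<longrightarrow> (last mid' \<in> A) \<noteq> (xn \<in> A)"
    using assms(1) snoc by (auto simp: red_append red_Cons)
  have mc: "set mid' \<subseteq> carrier P" using rm red_car by auto
  have xnc: "xn \<in> carrier P" using ln letter_car by auto
  show ?thesis
  proof (cases "xn \<in> A")
    case True
    have "wp xs = wp mid' \<otimes> xn" using snoc mc xnc by (simp add: wp_append)
    moreover have "mid' \<noteq> [] \<longrightarrow> hd mid' \<notin> A" using assms(2) snoc by auto
    ultimately show ?thesis using True rm j by (intro exI[of _ xn] exI[of _ mid']) auto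
  next
    case False
    have "wp xs = wp xs \<otimes> \<one>" using assms(1) red_car by simp
    then show ?thesis using False assms snoc subgroup.one_closed[OF subA]
      by (intro exI[of _ \<one>] exI[of _ xs]) auto
  qed
qed

lemma strip: assumes "z \<in> carrier P"
  shows "\<exists>\<alpha> \<beta> mid. \<alpha> \<in> A \<and> \<beta> \<in> A \<and> red mid \<and> z = \<alpha> \<otimes> wp mid \<otimes> \<beta> \<and> (mid \<noteq> [] \<longrightarrow> hd mid \<notin> A \<and> last mid \<notin> A)"
proof -
  have rz: "red (nf z)" and wz: "wp (nf z) = z" using nf assms by auto
  obtain \<alpha> ys where a: "\<alpha> \<in> A" "red ys" "z = \<alpha> \<otimes> wp ys" "ys \<noteq> [] \<longrightarrow> hd ys \<notin> A"
  proof (cases "nf z")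
    case Nil then show ?thesis using that[of \<one> "[]"] wz subgroup.one_closed[OF subA] by auto
  next
    case (Cons x1 ys)
    have x1c: "x1 \<in> carrier P" using rz Cons letter_car by (auto simp: red_Cons)
    have ysc: "set ys \<subseteq> carrier P" using rz Cons red_car by (auto simp: red_Cons)
    show ?thesis
    proof (cases "x1 \<in> A")
      case True then show ?thesis using that[of x1 ys] rz Cons wz by (auto simp: red_Cons)
    next
      case False then show ?thesis using that[of \<one> "nf z"] rz Cons wz assms subgroup.one_closed[OF subA] by auto
    qed
  qed
  obtain \<beta> mid where b: "\<beta> \<in> A" "red mid" "wp ys = wp mid \<otimes> \<beta>" "mid \<noteq> [] \<longrightarrow> hd mid \<notin> A \<and> last mid \<notin> A"
    using stripR[OF a(2) a(4)] by blast
  have "z = \<alpha> \<otimes> wp mid \<otimes> \<beta>"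
    using a(3) b(3) A_car[OF a(1)] A_car[OF b(1)] red_car[OF b(2)] by (simp add: m_assoc)
  then show ?thesis using a b by blast
qed

lemma cent_A: assumes a: "a \<in> A" "a \<noteq> \<one>" and z: "z \<in> carrier P" and comm: "z \<otimes> a = a \<otimes> z"
  shows "z \<in> A"
proof -
  obtain \<alpha> \<beta> mid where s: "\<alpha> \<in> A" "\<beta> \<in> A" "red mid" "z = \<alpha> \<otimes> wp mid \<otimes> \<beta>"
    "mid \<noteq> [] \<longrightarrow> hd mid \<notin> A \<and> last mid \<notin> A"
    using strip[OF z] by blast
  have ac: "\<alpha> \<in> carrier P" "\<beta> \<in> carrier P" "a \<in> carrier P" using s A_car a by auto
  have mc: "set mid \<subseteq> carrier P" using s(3) red_car by auto
  show ?thesis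
  proof (cases "mid = []")
    case True
    then show ?thesis using s ac subgroup.m_closed[OF subA] by simp
  next
    case False
    define m where "m = wp mid"
    have m: "m \<in> carrier P" unfolding m_def using mc by simp
    define a1 where "a1 = inv \<alpha> \<otimes> a \<otimes> \<alpha>"
    define a2 where "a2 = \<beta> \<otimes> inv a \<otimes> inv \<beta>"
    have a1A: "a1 \<in> A" unfolding a1_def
      using subgroup.m_closed[OF subA subgroup.m_closed[OF subA subgroup.m_inv_closed[OF subA s(1)] a(1)] s(1)] .
    have a2A: "a2 \<in> A" unfolding a2_def
      using subgroup.m_closed[OF subA subgroup.m_closed[OF subA s(2) subgroup.m_inv_closed[OF subA a(1)]] subgroup.m_inv_closed[OF subA s(2)]] .
    have e1: "\<alpha> \<otimes> a1 \<otimes> inv \<alpha> = a" unfolding a1_def using ac by (simp add: m_assoc cancel_simps)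
    have e2: "inv \<beta> \<otimes> a2 \<otimes> \<beta> = inv a" unfolding a2_def using ac by (simp add: m_assoc cancel_simps)
    have a1ne: "a1 \<noteq> \<one>"
    proof
      assume "a1 = \<one>" then have "a = \<alpha> \<otimes> inv \<alpha>" using e1 ac by simp
      then show False using a(2) ac by simp
    qed
    have a2ne: "a2 \<noteq> \<one>"
    proof
      assume "a2 = \<one>" then have "inv a = inv \<beta> \<otimes> \<beta>" using e2 ac by simp
      then show False using a(2) ac by simp
    qed
    have "a1 \<otimes> m \<otimes> a2 = inv \<alpha> \<otimes> (a \<otimes> z) \<otimes> (inv a \<otimes> inv \<beta>)"
      unfolding a1_def a2_def s(4) m_def using ac mc by (simp add: m_assoc)
    also have "\<dots> = inv \<alpha> \<otimes> (z \<otimes> a) \<otimes> (inv a \<otimes> inv \<beta>)" using comm by simp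
    also have "\<dots> = m"
      unfolding s(4) m_def using ac mc by (simp add: m_assoc cancel_simps)
    finally have eq: "a1 \<otimes> m \<otimes> a2 = m" .
    have la1: "letter a1" and la2: "letter a2" using a1A a2A a1ne a2ne unfolding letter_def by auto
    have "red ([a1] @ mid @ [a2])" using la1 la2 s(3) s(5) False a1A a2A
      by (simp add: red_append red_Cons)
    moreover have "wp ([a1] @ mid @ [a2]) = m"
      using eq la1 la2 letter_car mc unfolding m_def by (simp add: wp_append m_assoc)
    ultimately have "[a1] @ mid @ [a2] = mid" using nf_uniq s(3) m_def by blast
    then have "length ([a1] @ mid @ [a2]) = length mid" by simp
    then show ?thesis by simp
  qed
qed


lemma mul_append: "q \<noteq> [] \<Longrightarrow> mul u (q @ r) = mul u q @ r"
  by (cases q) (auto simp: mul_def)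

lemma muls_suffix: "length us < length vs \<Longrightarrow> \<exists>pre. muls us vs = pre @ drop (length us) vs"
proof (induction us)
  case Nil then show ?case by (simp add: muls_def)
next
  case (Cons u us)
  then obtain pre where p: "muls us vs = pre @ drop (length us) vs" by auto
  have "drop (length us) vs = vs ! length us # drop (Suc (length us)) vs"
    using Cons.prems by (simp add: Cons_nth_drop_Suc)
  then have "muls us vs = (pre @ [vs ! length us]) @ drop (Suc (length us)) vs" using p by simp
  moreover have "mul u ((pre @ [vs ! length us]) @ drop (Suc (length us)) vs) = mul u (pre @ [vs ! length us]) @ drop (Suc (length us)) vs"
    by (rule mul_append) simp
  ultimately have "muls (u#us) vs = mul u (pre @ [vs ! length us]) @ drop (Suc (length us)) vs"
    by (simp add: muls_def del: append_assoc)
  then show ?case by auto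
qed

lemma nf_mult: "red us \<Longrightarrow> red vs \<Longrightarrow> nf (wp us \<otimes> wp vs) = muls us vs"
  using muls_ok[of us vs] nf_eq unfolding red_def letter_def by (metis subsetI)

lemma nf_mult_last: assumes "red us" "red vs" "length us < length vs"
  shows "nf (wp us \<otimes> wp vs) \<noteq> [] \<and> last (nf (wp us \<otimes> wp vs)) = last vs"
proof -
  obtain pre where "muls us vs = pre @ drop (length us) vs" using muls_suffix[OF assms(3)] by blast
  moreover have "drop (length us) vs \<noteq> []" using assms(3) by simp
  ultimately show ?thesis using nf_mult[OF assms(1,2)] by (simp add: last_drop)
qed

lemma nf_mult_hd: assumes "red us" "red vs" "length vs < length us"
  shows "nf (wp us \<otimes> wp vs) \<noteq> [] \<and> hd (nf (wp us \<otimes> wp vs)) = hd us"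
proof -
  have uc: "set us \<subseteq> carrier P" and vc: "set vs \<subseteq> carrier P" using assms red_car by auto
  have ne: "us \<noteq> []" using assms(3) by auto
  have "inv (wp us \<otimes> wp vs) = wp (invw vs) \<otimes> wp (invw us)"
    using uc vc by (simp add: wp_invw inv_mult_group)
  moreover have "nf (wp (invw vs) \<otimes> wp (invw us)) \<noteq> [] \<and> last (nf (wp (invw vs) \<otimes> wp (invw us))) = last (invw us)"
    using nf_mult_last[OF red_invw[OF assms(2)] red_invw[OF assms(1)]] assms(3) by simp
  ultimately have h: "nf (inv (wp us \<otimes> wp vs)) \<noteq> [] \<and> last (nf (inv (wp us \<otimes> wp vs))) = inv (hd us)"
    using ne by (simp add: last_invw)
  have pc: "wp us \<otimes> wp vs \<in> carrier P" using uc vc by simp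
  have "nf (wp us \<otimes> wp vs) = invw (nf (inv (wp us \<otimes> wp vs)))"
    using nf_inv[OF inv_closed[OF pc]] pc by simp
  moreover have "hd us \<in> carrier P" using uc ne by auto
  ultimately show ?thesis using h by (simp add: hd_invw)
qed

definition cpow where "cpow cs M = concat (replicate M cs)"

lemma cpow_Suc: "cpow cs (Suc M) = cs @ cpow cs M" by (simp add: cpow_def)
lemma cpow_Suc2: "cpow cs (Suc M) = cpow cs M @ cs" by (simp add: cpow_def replicate_append_same[symmetric])
lemma length_cpow[simp]: "length (cpow cs M) = M * length cs" by (simp add: cpow_def length_concat sum_list_replicate)
lemma cpow_add: "cpow cs (M + N) = cpow cs M @ cpow cs N" by (simp add: cpow_def replicate_add)

lemma CR_nf: "CR c \<Longrightarrow> red (nf c) \<and> nf c \<noteq> [] \<and> (hd (nf c) \<in> A) \<noteq> (last (nf c) \<in> A) \<and> length (nf c) \<ge> 2"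
  unfolding CR_def using nf by auto

lemma hd_cpow: "M > 0 \<Longrightarrow> cs \<noteq> [] \<Longrightarrow> hd (cpow cs M) = hd cs"
  by (cases M) (auto simp: cpow_Suc)
lemma last_cpow: "M > 0 \<Longrightarrow> cs \<noteq> [] \<Longrightarrow> last (cpow cs M) = last cs"
  by (cases M) (auto simp: cpow_Suc2)

lemma red_cpow: assumes "CR c" shows "red (cpow (nf c) M) \<and> wp (cpow (nf c) M) = c [^] M"
proof (induction M)
  case 0 then show ?case by (simp add: cpow_def)
next
  case (Suc M)
  have h: "red (nf c) \<and> nf c \<noteq> [] \<and> (hd (nf c) \<in> A) \<noteq> (last (nf c) \<in> A)" using CR_nf[OF assms] by auto
  have cc: "c \<in> carrier P" using assms CR_def by auto
  have "red (cpow (nf c) M @ nf c)"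
    using Suc h by (cases "M = 0") (simp add: cpow_def, simp add: red_append last_cpow)
  moreover have "wp (cpow (nf c) M @ nf c) = c [^] Suc M"
    using Suc h red_car[of "nf c"] red_car[of "cpow (nf c) M"] nf(2)[OF cc]
    by (simp add: wp_append)
  ultimately show ?case by (simp add: cpow_Suc2)
qed

lemma nf_cpow: "CR c \<Longrightarrow> nf (c [^] M) = cpow (nf c) M"
  using red_cpow nf_eq by metis


definition M0 where "M0 s = Suc (length (nf s))"
definition tau where "tau c s = int (length (nf (s \<otimes> c [^] M0 s))) - int (M0 s * length (nf c))"
definition cent where "cent x = {s \<in> carrier P. s \<otimes> x = x \<otimes> s}"

lemma CR_car: "CR c \<Longrightarrow> c \<in> carrier P" unfolding CR_def by simp

lemma M0_big: assumes "CR c" "M \<ge> M0 s" shows "length (nf s) < M * length (nf c)"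
proof -
  have "length (nf c) \<ge> 2" using CR_nf[OF assms(1)] by simp
  then have "M * 1 \<le> M * length (nf c)" by (intro mult_le_mono2) simp
  then have "M \<le> M * length (nf c)" by simp
  then show ?thesis using assms(2) unfolding M0_def by linarith
qed

lemma L_last: assumes cr: "CR c" and s: "s \<in> carrier P" and M: "M \<ge> M0 s"
  shows "nf (s \<otimes> c [^] M) \<noteq> [] \<and> last (nf (s \<otimes> c [^] M)) = last (nf c)"
proof -
  have "M > 0" using M unfolding M0_def by simp
  have "nf (wp (nf s) \<otimes> wp (cpow (nf c) M)) \<noteq> [] \<and> last (nf (wp (nf s) \<otimes> wp (cpow (nf c) M))) = last (cpow (nf c) M)"
    using nf_mult_last[OF nf(1)[OF s] conjunct1[OF red_cpow[OF cr]]] M0_big[OF cr M] by simp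
  moreover have "last (cpow (nf c) M) = last (nf c)" using last_cpow[OF \<open>M > 0\<close>, of "nf c"] CR_nf[OF cr] by blast
  ultimately show ?thesis using nf(2)[OF s] red_cpow[OF cr] by simp
qed

lemma L_hd: assumes cr: "CR c" and s: "s \<in> carrier P" and M: "M \<ge> M0 s"
  shows "nf (c [^] M \<otimes> s) \<noteq> [] \<and> hd (nf (c [^] M \<otimes> s)) = hd (nf c)"
proof -
  have "M > 0" using M unfolding M0_def by simp
  have "nf (wp (cpow (nf c) M) \<otimes> wp (nf s)) \<noteq> [] \<and> hd (nf (wp (cpow (nf c) M) \<otimes> wp (nf s))) = hd (cpow (nf c) M)"
    using nf_mult_hd[OF conjunct1[OF red_cpow[OF cr]] nf(1)[OF s]] M0_big[OF cr M] by simp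
  moreover have "hd (cpow (nf c) M) = hd (nf c)" using hd_cpow[OF \<open>M > 0\<close>, of "nf c"] CR_nf[OF cr] by blast
  ultimately show ?thesis using nf(2)[OF s] red_cpow[OF cr] by simp
qed

lemma L_step: assumes cr: "CR c" and s: "s \<in> carrier P" and M: "M \<ge> M0 s"
  shows "nf (s \<otimes> c [^] Suc M) = nf (s \<otimes> c [^] M) @ nf c"
proof -
  have cc: "c \<in> carrier P" using cr CR_car by simp
  have sc: "s \<otimes> c [^] M \<in> carrier P" using s cc by simp
  have h: "red (nf c) \<and> nf c \<noteq> [] \<and> (hd (nf c) \<in> A) \<noteq> (last (nf c) \<in> A)" using CR_nf[OF cr] by auto
  have "red (nf (s \<otimes> c [^] M) @ nf c)"
    using L_last[OF cr s M] h nf(1)[OF sc] by (simp add: red_append)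
  moreover have "wp (nf (s \<otimes> c [^] M) @ nf c) = s \<otimes> c [^] Suc M"
    using nf[OF sc] nf[OF cc] red_car s cc by (simp add: wp_append m_assoc)
  ultimately show ?thesis using nf_eq by metis
qed

lemma L_len: assumes cr: "CR c" and s: "s \<in> carrier P" and M: "M \<ge> M0 s"
  shows "length (nf (s \<otimes> c [^] M)) = length (nf (s \<otimes> c [^] M0 s)) + (M - M0 s) * length (nf c)"
  using M
proof (induction M rule: dec_induct)
  case base then show ?case by simp
next
  case (step n)
  then show ?case using L_step[OF cr s, of n] by (simp add: Suc_diff_le)
qed

lemma tau_eq: assumes cr: "CR c" and s: "s \<in> carrier P" and M: "M \<ge> M0 s"
  shows "tau c s = int (length (nf (s \<otimes> c [^] M))) - int (M * length (nf c))"
proof -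
  have "int ((M - M0 s) * length (nf c)) = int (M * length (nf c)) - int (M0 s * length (nf c))"
    using M by (simp add: diff_mult_distrib of_nat_diff)
  then show ?thesis unfolding tau_def L_len[OF assms] by simp
qed

lemma cent_pow: assumes "s \<in> cent x" "x \<in> carrier P" shows "s \<otimes> x [^] (M::nat) = x [^] M \<otimes> s"
proof (induction M)
  case 0 then show ?case using assms by (simp add: cent_def)
next
  case (Suc M)
  have sc: "s \<in> carrier P" and sx: "s \<otimes> x = x \<otimes> s" using assms by (auto simp: cent_def)
  have "s \<otimes> x [^] Suc M = (s \<otimes> x [^] M) \<otimes> x" using sc assms(2) by (simp add: m_assoc)
  also have "\<dots> = x [^] M \<otimes> (s \<otimes> x)" using Suc sc assms(2) by (simp add: m_assoc)
  also have "\<dots> = x [^] Suc M \<otimes> s" using sx sc assms(2) by (simp add: m_assoc)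
  finally show ?case .
qed

lemma cent_hd: assumes cr: "CR c" and s: "s \<in> cent c" and M: "M \<ge> M0 s"
  shows "nf (s \<otimes> c [^] M) \<noteq> [] \<and> hd (nf (s \<otimes> c [^] M)) = hd (nf c)"
  using L_hd[OF cr _ M] cent_pow[OF s CR_car[OF cr]] s by (simp add: cent_def)

lemma cent_one: "\<one> \<in> cent x" if "x \<in> carrier P" using that by (simp add: cent_def)
lemma cent_mult: assumes "s1 \<in> cent x" "s2 \<in> cent x" "x \<in> carrier P" shows "s1 \<otimes> s2 \<in> cent x"
proof -
  have c: "s1 \<in> carrier P" "s2 \<in> carrier P" using assms by (auto simp: cent_def)
  have e1: "s1 \<otimes> x = x \<otimes> s1" and e2: "s2 \<otimes> x = x \<otimes> s2" using assms by (auto simp: cent_def)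
  have "s1 \<otimes> s2 \<otimes> x = s1 \<otimes> (s2 \<otimes> x)" using c assms by (simp add: m_assoc)
  also have "\<dots> = s1 \<otimes> (x \<otimes> s2)" using e2 by simp
  also have "\<dots> = (s1 \<otimes> x) \<otimes> s2" using c assms by (simp add: m_assoc)
  also have "\<dots> = (x \<otimes> s1) \<otimes> s2" using e1 by simp
  also have "\<dots> = x \<otimes> (s1 \<otimes> s2)" using c assms by (simp add: m_assoc)
  finally show ?thesis using c by (simp add: cent_def)
qed
lemma cent_inv: assumes "s \<in> cent x" "x \<in> carrier P" shows "inv s \<in> cent x"
proof -
  have c: "s \<in> carrier P" using assms by (auto simp: cent_def)
  have e: "s \<otimes> x = x \<otimes> s" using assms by (auto simp: cent_def)
  have "x \<otimes> inv s = inv s \<otimes> (s \<otimes> x) \<otimes> inv s" using c assms by (simp add: m_assoc cancel_simps)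
  also have "\<dots> = inv s \<otimes> (x \<otimes> s) \<otimes> inv s" using e by simp
  also have "\<dots> = inv s \<otimes> x" using c assms by (simp add: m_assoc)
  finally show ?thesis using c by (simp add: cent_def)
qed
lemma cent_car: "s \<in> cent x \<Longrightarrow> s \<in> carrier P" by (simp add: cent_def)

lemma tau_mult: assumes cr: "CR c" and s1: "s1 \<in> cent c" and s2: "s2 \<in> cent c"
  shows "tau c (s1 \<otimes> s2) = tau c s1 + tau c s2"
proof -
  have cc: "c \<in> carrier P" using cr CR_car by simp
  have sc: "s1 \<in> carrier P" "s2 \<in> carrier P" using s1 s2 cent_car by auto
  define M where "M = M0 s1 + M0 s2 + M0 (s1 \<otimes> s2)"
  have M1: "M \<ge> M0 s1" and M2: "M \<ge> M0 s2" and M12: "M + M \<ge> M0 (s1 \<otimes> s2)" unfolding M_def by auto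
  define w1 where "w1 = nf (s1 \<otimes> c [^] M)"
  define w2 where "w2 = nf (s2 \<otimes> c [^] M)"
  have p1: "s1 \<otimes> c [^] M \<in> carrier P" and p2: "s2 \<otimes> c [^] M \<in> carrier P" using sc cc by auto
  have h: "red (nf c) \<and> nf c \<noteq> [] \<and> (hd (nf c) \<in> A) \<noteq> (last (nf c) \<in> A)" using CR_nf[OF cr] by auto
  have "red (w1 @ w2)"
    unfolding w1_def w2_def using L_last[OF cr sc(1) M1] cent_hd[OF cr s2 M2] h nf(1)[OF p1] nf(1)[OF p2]
    by (simp add: red_append)
  moreover have "wp (w1 @ w2) = (s1 \<otimes> s2) \<otimes> c [^] (M + M)"
  proof -
    have "wp (w1 @ w2) = (s1 \<otimes> c [^] M) \<otimes> (s2 \<otimes> c [^] M)"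
      unfolding w1_def w2_def using nf[OF p1] nf[OF p2] red_car by (simp add: wp_append)
    also have "\<dots> = s1 \<otimes> (c [^] M \<otimes> s2) \<otimes> c [^] M" using sc cc by (simp add: m_assoc)
    also have "\<dots> = s1 \<otimes> (s2 \<otimes> c [^] M) \<otimes> c [^] M" using cent_pow[OF s2 cc] by simp
    also have "\<dots> = (s1 \<otimes> s2) \<otimes> (c [^] M \<otimes> c [^] M)" using sc cc by (simp add: m_assoc)
    also have "\<dots> = (s1 \<otimes> s2) \<otimes> c [^] (M + M)" using cc by (simp add: nat_pow_mult)
    finally show ?thesis .
  qed
  ultimately have "nf ((s1 \<otimes> s2) \<otimes> c [^] (M + M)) = w1 @ w2" using nf_eq by metis
  then have "tau c (s1 \<otimes> s2) = int (length w1 + length w2) - int ((M + M) * length (nf c))"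
    using tau_eq[OF cr _ M12] sc by simp
  moreover have "tau c s1 = int (length w1) - int (M * length (nf c))" unfolding w1_def using tau_eq[OF cr sc(1) M1] .
  moreover have "tau c s2 = int (length w2) - int (M * length (nf c))" unfolding w2_def using tau_eq[OF cr sc(2) M2] .
  ultimately show ?thesis by (simp add: add_mult_distrib)
qed

lemma tau_one: assumes cr: "CR c" shows "tau c \<one> = 0"
proof -
  have cc: "c \<in> carrier P" using cr CR_car by simp
  show ?thesis using tau_eq[OF cr one_closed order_refl] nf_cpow[OF cr] cc by simp
qed

lemma tau_inv: assumes cr: "CR c" and s: "s \<in> cent c" shows "tau c (inv s) = - tau c s"
proof -
  have cc: "c \<in> carrier P" using cr CR_car by simp
  have "tau c (s \<otimes> inv s) = tau c s + tau c (inv s)" using tau_mult[OF cr s cent_inv[OF s cc]] .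
  then show ?thesis using tau_one[OF cr] s cent_car by simp
qed

lemma tau_c: assumes cr: "CR c" shows "tau c c = int (length (nf c))"
proof -
  have cc: "c \<in> carrier P" using cr CR_car by simp
  have "c \<otimes> c [^] M0 c = c [^] Suc (M0 c)" by (rule nat_pow_Suc2[OF cc, symmetric])
  then show ?thesis using tau_eq[OF cr cc order_refl] nf_cpow[OF cr, of "Suc (M0 c)"]
    by (simp add: cpow_Suc algebra_simps)
qed

lemma c_cent: "x \<in> carrier P \<Longrightarrow> x \<in> cent x" by (simp add: cent_def)

lemma tau_inj: assumes cr: "CR c" and s: "s \<in> cent c" and t0: "tau c s = 0" shows "s = \<one>"
proof -
  have cc: "c \<in> carrier P" using cr CR_car by simp
  have sc: "s \<in> carrier P" using s cent_car by simp
  define M where "M = M0 s"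
  define w where "w = nf (s \<otimes> c [^] M)"
  have p: "s \<otimes> c [^] M \<in> carrier P" using sc cc by simp
  have "tau c s = int (length w) - int (M * length (nf c))" using tau_eq[OF cr sc, of M] unfolding w_def M_def by simp
  then have "int (length w) = int (M * length (nf c))" using t0 by simp
  then have lw: "length w = M * length (nf c)" by (simp only: of_nat_eq_iff)
  have h: "red (nf c) \<and> nf c \<noteq> [] \<and> (hd (nf c) \<in> A) \<noteq> (last (nf c) \<in> A)" using CR_nf[OF cr] by auto
  have l: "w \<noteq> [] \<and> last w = last (nf c)" unfolding w_def M_def using L_last[OF cr sc order_refl] .
  have hh: "hd w = hd (nf c)" unfolding w_def M_def using cent_hd[OF cr s order_refl] by simp
  have rw: "red w" unfolding w_def using nf(1)[OF p] .
  have "red (w @ nf c)" using rw h l by (simp add: red_append)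
  moreover have "red (nf c @ w)" using rw h l hh by (simp add: red_append)
  moreover have "wp (w @ nf c) = wp (nf c @ w)"
  proof -
    have "wp (w @ nf c) = s \<otimes> c [^] M \<otimes> c" unfolding w_def using nf[OF p] nf[OF cc] red_car by (simp add: wp_append)
    also have "\<dots> = s \<otimes> c [^] Suc M" using sc cc by (simp add: m_assoc)
    also have "\<dots> = s \<otimes> (c \<otimes> c [^] M)" using nat_pow_Suc2[OF cc, of M] by simp
    also have "\<dots> = c \<otimes> (s \<otimes> c [^] M)" using s sc cc by (simp add: cent_def flip: m_assoc)
    also have "\<dots> = wp (nf c @ w)" unfolding w_def using nf[OF p] nf[OF cc] red_car by (simp add: wp_append)
    finally show ?thesis .
  qed
  ultimately have "w @ nf c = nf c @ w" using nf_uniq by blast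
  then have "w = cpow (nf c) M" using comm_rep lw unfolding cpow_def by blast
  then have "s \<otimes> c [^] M = c [^] M" using nf(2)[OF p] red_cpow[OF cr] unfolding w_def by metis
  then show ?thesis using sc cc by simp
qed

lemma tau_pow_nat: assumes cr: "CR c" and s: "s \<in> cent c"
  shows "s [^] (n::nat) \<in> cent c \<and> tau c (s [^] n) = int n * tau c s"
proof (induction n)
  case 0 then show ?case using tau_one[OF cr] cent_one CR_car[OF cr] by simp
next
  case (Suc n)
  have cc: "c \<in> carrier P" using cr CR_car by simp
  have "s [^] Suc n = s [^] n \<otimes> s" by simp
  then show ?case using Suc tau_mult[OF cr _ s, of "s [^] n"] cent_mult[OF _ s cc, of "s [^] n"]
    by (simp add: algebra_simps)
qed

lemma tau_pow_int: assumes cr: "CR c" and s: "s \<in> cent c"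
  shows "s [^] (q::int) \<in> cent c \<and> tau c (s [^] q) = q * tau c s"
proof (cases q rule: int_cases2)
  case (nonneg n)
  then show ?thesis using tau_pow_nat[OF cr s, of n] by (simp add: int_pow_int)
next
  case (nonpos n)
  have sc: "s \<in> carrier P" using s cent_car by simp
  have cc: "c \<in> carrier P" using cr CR_car by simp
  have "s [^] q = inv (s [^] n)" using nonpos sc by (simp add: int_pow_neg_int)
  then show ?thesis using tau_pow_nat[OF cr s, of n] tau_inv[OF cr, of "s [^] n"] cent_inv[OF _ cc, of "s [^] n"] nonpos
    by simp
qed


lemma tau_gen: assumes cr: "CR c"
  shows "\<exists>t\<in>cent c. tau c t > 0 \<and> (\<forall>s\<in>cent c. \<exists>q. s = t [^] (q::int) \<and> tau c s = q * tau c t)"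
proof -
  have cc: "c \<in> carrier P" using cr CR_car by simp
  define T where "T = {n::nat. n > 0 \<and> (\<exists>s\<in>cent c. tau c s = int n)}"
  have "length (nf c) \<in> T" unfolding T_def using tau_c[OF cr] c_cent[OF cc] CR_nf[OF cr] by auto
  then have dT: "(LEAST n. n \<in> T) \<in> T" by (rule LeastI)
  define d where "d = (LEAST n. n \<in> T)"
  obtain t where t: "t \<in> cent c" "tau c t = int d" "d > 0" using dT unfolding d_def T_def by blast
  have tc: "t \<in> carrier P" using t cent_car by simp
  have "\<exists>q. s = t [^] (q::int) \<and> tau c s = q * tau c t" if s: "s \<in> cent c" for s
  proof -
    define q where "q = tau c s div int d"
    define r where "r = tau c s mod int d"
    have qr: "tau c s = q * int d + r" unfolding q_def r_def by simp
    have r0: "0 \<le> r" "r < int d" unfolding r_def using t(3) by auto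
    have tq: "t [^] q \<in> cent c" "tau c (t [^] q) = q * int d" using tau_pow_int[OF cr t(1)] t(2) by auto
    have s'c: "s \<otimes> inv (t [^] q) \<in> cent c" using cent_mult[OF s cent_inv[OF tq(1) cc] cc] .
    have ts': "tau c (s \<otimes> inv (t [^] q)) = r"
      using tau_mult[OF cr s cent_inv[OF tq(1) cc]] tau_inv[OF cr tq(1)] tq(2) qr by simp
    have "r = 0"
    proof (rule ccontr)
      assume "r \<noteq> 0"
      then have "nat r \<in> T" unfolding T_def using r0 s'c ts' by auto
      then have "d \<le> nat r" unfolding d_def by (rule Least_le)
      then show False using r0 by linarith
    qed
    then have "s \<otimes> inv (t [^] q) = \<one>" using tau_inj[OF cr s'c] ts' by simp
    then have "s = t [^] q" using mult_inv_eq_one[of s "t [^] q"] s tq cent_car by simp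
    then show ?thesis using tq(2) t(2) by auto
  qed
  then have *: "\<forall>s\<in>cent c. \<exists>q. s = t [^] (q::int) \<and> tau c s = q * tau c t" using t(2) by simp
  show ?thesis
  proof (rule bexI[of _ t])
    show "t \<in> cent c" by fact
    show "0 < tau c t \<and> (\<forall>s\<in>cent c. \<exists>q. s = t [^] (q::int) \<and> tau c s = q * tau c t)" using * t by simp
  qed
qed

lemma cent_abelian: assumes cr: "CR c" and s1: "s1 \<in> cent c" and s2: "s2 \<in> cent c"
  shows "s1 \<otimes> s2 = s2 \<otimes> s1"
proof -
  have cc: "c \<in> carrier P" using cr CR_car by simp
  have sc: "s1 \<in> carrier P" "s2 \<in> carrier P" using s1 s2 cent_car by auto
  have m: "s1 \<otimes> s2 \<in> cent c" "s2 \<otimes> s1 \<in> cent c" using cent_mult s1 s2 cc by auto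
  have "tau c ((s1 \<otimes> s2) \<otimes> inv (s2 \<otimes> s1)) = 0"
    using tau_mult[OF cr m(1) cent_inv[OF m(2) cc]] tau_inv[OF cr m(2)] tau_mult[OF cr s1 s2] tau_mult[OF cr s2 s1]
    by simp
  then have "(s1 \<otimes> s2) \<otimes> inv (s2 \<otimes> s1) = \<one>" using tau_inj[OF cr cent_mult[OF m(1) cent_inv[OF m(2) cc] cc]] by simp
  then show ?thesis using sc mult_inv_eq_one[of "s1 \<otimes> s2" "s2 \<otimes> s1"] by simp
qed

lemma tau_eq_inj: assumes cr: "CR c" and s1: "s1 \<in> cent c" and s2: "s2 \<in> cent c" and e: "tau c s1 = tau c s2"
  shows "s1 = s2"
proof -
  have cc: "c \<in> carrier P" using cr CR_car by simp
  have sc: "s1 \<in> carrier P" "s2 \<in> carrier P" using s1 s2 cent_car by auto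
  have "tau c (s1 \<otimes> inv s2) = 0" using tau_mult[OF cr s1 cent_inv[OF s2 cc]] tau_inv[OF cr s2] e by simp
  then have "s1 \<otimes> inv s2 = \<one>" using tau_inj[OF cr cent_mult[OF s1 cent_inv[OF s2 cc] cc]] by simp
  then show ?thesis using sc mult_inv_eq_one by simp
qed

lemma cj_cent: "w \<in> carrier P \<Longrightarrow> x \<in> carrier P \<Longrightarrow> s \<in> cent x \<Longrightarrow> cj w s \<in> cent (cj w x)"
  unfolding cent_def using cj_comm by auto

lemma eps: assumes cr: "CR c" and y: "y \<in> carrier P"
  and nz: "\<forall>s\<in>cent c. cj y s \<in> cent c \<and> cj (inv y) s \<in> cent c"
  shows "\<exists>e. (e = 1 \<or> e = -1) \<and> (\<forall>s\<in>cent c. tau c (cj y s) = e * tau c s)"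
proof -
  obtain t where t: "t \<in> cent c" "tau c t > 0" "\<forall>s\<in>cent c. \<exists>q. s = t [^] (q::int) \<and> tau c s = q * tau c t"
    using tau_gen[OF cr] by blast
  have tc: "t \<in> carrier P" using t cent_car by simp
  obtain e :: int where e: "cj y t = t [^] e" "tau c (cj y t) = e * tau c t" using t(3) nz t(1) by blast
  have "cj (inv y) t \<in> cent c" using nz t(1) by blast
  then obtain f :: int where f: "cj (inv y) t = t [^] f" using t(3) by blast
  have gt: "cj y t \<in> cent c" using nz t(1) by blast
  have "t = cj y (cj (inv y) t)" using y tc by simp
  also have "\<dots> = (cj y t) [^] f" using f cj_pow_int y tc by simp
  finally have "tau c t = f * tau c (cj y t)" using tau_pow_int[OF cr gt] by metis
  then have "tau c t = f * e * tau c t" using e(2) by simp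
  then have "1 * tau c t = (f * e) * tau c t" by simp
  then have fe: "f * e = 1" using t(2) by (metis mult_cancel_right less_irrefl)
  then have e1: "e = 1 \<or> e = -1" using zmult_eq_1_iff by (metis mult.commute)
  have "\<forall>s\<in>cent c. tau c (cj y s) = e * tau c s"
  proof
    fix s assume s: "s \<in> cent c"
    obtain q where q: "s = t [^] q" "tau c s = q * tau c t" using t(3) s by blast
    have "cj y s = (cj y t) [^] q" using q(1) cj_pow_int y tc by simp
    then have "tau c (cj y s) = q * tau c (cj y t)" using tau_pow_int[OF cr gt] by simp
    then show "tau c (cj y s) = e * tau c s" using e(2) q(2) by simp
  qed
  then show ?thesis using e1 by blast
qed

lemma cr_normalizes: assumes cr: "CR c" and y: "y \<in> carrier P" and d: "cj y c \<in> cent c"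
  shows "\<forall>s\<in>cent c. cj y s \<in> cent c \<and> cj (inv y) s \<in> cent c"
proof
  fix s assume s: "s \<in> cent c"
  have cc: "c \<in> carrier P" using cr CR_car by simp
  have sc: "s \<in> carrier P" using s cent_car by simp
  have iy: "inv y \<in> carrier P" using y by simp
  have dc: "cj y c \<in> carrier P" using y cc by simp
  have s0: "cj (inv y) c \<in> cent c"
  proof -
    have "c \<otimes> cj y c = cj y c \<otimes> c" using d unfolding cent_def by auto
    then have "cj (inv y) c \<otimes> cj (inv y) (cj y c) = cj (inv y) (cj y c) \<otimes> cj (inv y) c"
      using cj_comm[OF iy cc dc] by simp
    then show ?thesis using y cc unfolding cent_def by simp
  qed
  have "cj y s \<otimes> c = c \<otimes> cj y s"
  proof -
    have "cj y s \<otimes> c = cj y s \<otimes> cj y (cj (inv y) c)" using y cc by simp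
    also have "\<dots> = cj y (cj (inv y) c) \<otimes> cj y s"
      using cj_comm[OF y sc cj_closed[OF iy cc]] cent_abelian[OF cr s s0] by simp
    also have "\<dots> = c \<otimes> cj y s" using y cc by simp
    finally show ?thesis .
  qed
  moreover have "cj (inv y) s \<otimes> c = c \<otimes> cj (inv y) s"
  proof -
    have "s \<otimes> cj y c = cj y c \<otimes> s" using cent_abelian[OF cr s d] .
    then have "cj (inv y) s \<otimes> cj (inv y) (cj y c) = cj (inv y) (cj y c) \<otimes> cj (inv y) s"
      using cj_comm[OF iy sc dc] by simp
    then show ?thesis using y cc by simp
  qed
  ultimately show "cj y s \<in> cent c \<and> cj (inv y) s \<in> cent c" using y iy sc unfolding cent_def by auto
qed

lemma cr_P3: assumes cr: "CR c" and y: "y \<in> carrier P" and d: "cj y c \<in> cent c"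
  shows "cj y c = c \<or> cj y c = inv c"
proof -
  have cc: "c \<in> carrier P" using cr CR_car by simp
  obtain e where e: "e = 1 \<or> e = -1" "\<forall>s\<in>cent c. tau c (cj y s) = e * tau c s"
    using eps[OF cr y cr_normalizes[OF cr y d]] by blast
  have tcy: "tau c (cj y c) = e * tau c c" using e(2) c_cent[OF cc] by blast
  show ?thesis
  proof (cases "e = 1")
    case True
    then show ?thesis using tau_eq_inj[OF cr d c_cent[OF cc]] tcy by simp
  next
    case False
    then have "e = -1" using e by simp
    then show ?thesis using tau_eq_inj[OF cr d cent_inv[OF c_cent[OF cc] cc]] tcy tau_inv[OF cr c_cent[OF cc]] by simp
  qed
qed

lemma cr_P4: assumes cr: "CR c" and y: "y \<in> carrier P" and d: "cj y c = inv c"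
  shows "y \<otimes> y = \<one> \<and> (\<forall>s\<in>cent c. cj y s = inv s)"
proof -
  have cc: "c \<in> carrier P" using cr CR_car by simp
  have d': "cj y c \<in> cent c" using d cent_inv[OF c_cent[OF cc] cc] by simp
  obtain e where e: "e = 1 \<or> e = -1" "\<forall>s\<in>cent c. tau c (cj y s) = e * tau c s"
    using eps[OF cr y cr_normalizes[OF cr y d']] by blast
  have tcpos: "tau c c > 0" using tau_c[OF cr] CR_nf[OF cr] by simp
  have "tau c (inv c) = e * tau c c" using e(2) c_cent[OF cc] d by metis
  then have "- tau c c = e * tau c c" using tau_inv[OF cr c_cent[OF cc]] by simp
  then have em: "e = -1" using e(1) tcpos by auto
  have inv_all: "\<forall>s\<in>cent c. cj y s = inv s"
  proof
    fix s assume s: "s \<in> cent c"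
    have "cj y s \<in> cent c" using cr_normalizes[OF cr y d'] s by blast
    moreover have "tau c (cj y s) = tau c (inv s)" using e(2) s em tau_inv[OF cr s] by simp
    ultimately show "cj y s = inv s" using tau_eq_inj[OF cr _ cent_inv[OF s cc]] by blast
  qed
  have yy: "y \<otimes> y \<in> cent c"
  proof -
    have "cj (y \<otimes> y) c = cj y (cj y c)" using y cc by (simp add: cj_cj)
    also have "\<dots> = c" using d y cc cj_inv by simp
    finally have "cj (y \<otimes> y) c = c" .
    then have "(y \<otimes> y) \<otimes> c = c \<otimes> (y \<otimes> y)" using cj_fix[of "y \<otimes> y" c] y cc by simp
    then show ?thesis using y unfolding cent_def by simp
  qed
  have "cj y (y \<otimes> y) = y \<otimes> y" using y by (simp add: cj_def m_assoc)
  then have "y \<otimes> y = inv (y \<otimes> y)" using inv_all yy by metis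
  then have "tau c (y \<otimes> y) = - tau c (y \<otimes> y)" using tau_inv[OF cr yy] by metis
  then have "tau c (y \<otimes> y) = 0" by simp
  then have "y \<otimes> y = \<one>" using tau_inj[OF cr yy] by simp
  then show ?thesis using inv_all by simp
qed


lemma fp_swap: "is_free_product P B A"
proof -
  have "reduced_word P B A xs = reduced_word P A B xs" for xs
    unfolding reduced_word_def by blast
  moreover have "B \<union> A = A \<union> B" by blast
  ultimately show ?thesis using isfp unfolding is_free_product_def by simp
qed

lemma cj_cj_conj: "w \<in> carrier P \<Longrightarrow> a \<in> carrier P \<Longrightarrow> b \<in> carrier P \<Longrightarrow> cj (cj w a) (cj w b) = cj w (cj a b)"
  by (simp add: cj_def m_assoc inv_mult_group cancel_simps)

lemma ell_iff: "elliptic P A B x \<longleftrightarrow> (\<exists>p\<in>carrier P. \<exists>a\<in>A \<union> B. x = cj p a)"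
  unfolding elliptic_def cj_def by simp

lemma nonell: assumes "x \<in> carrier P" "\<not> elliptic P A B x" shows "\<exists>w\<in>carrier P. \<exists>c. CR c \<and> x = cj w c"
proof -
  obtain w c where w: "w \<in> carrier P" "x = w \<otimes> c \<otimes> inv w" "c \<in> A \<union> B \<or> CR c" using conj_cr[OF assms(1)] by blast
  show ?thesis
  proof (cases "c \<in> A \<union> B")
    case True then have "elliptic P A B x" unfolding elliptic_def using w by blast
    then show ?thesis using assms by simp
  next
    case False then show ?thesis using w unfolding cj_def by blast
  qed
qed

lemma one_ell: "elliptic P A B \<one>"
  unfolding ell_iff using subgroup.one_closed[OF subA] by (intro bexI[of _ \<one>]) auto

lemma FP0: assumes "x \<in> carrier P" "\<not> elliptic P A B x" shows "x \<otimes> x \<noteq> \<one>"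
proof -
  obtain w c where w: "w \<in> carrier P" "CR c" "x = cj w c" using nonell[OF assms] by blast
  have cc: "c \<in> carrier P" using w CR_car by simp
  have "nf (c [^] (2::nat)) \<noteq> []" using nf_cpow[OF w(2), of 2] CR_nf[OF w(2)] by (simp add: cpow_def)
  then have "c [^] (2::nat) \<noteq> \<one>" by auto
  then have "c \<otimes> c \<noteq> \<one>" using cc by (simp add: numeral_2_eq_2)
  then show ?thesis using w cc cj_mult[symmetric] cj_eq_one by simp
qed

lemma FP1: assumes x: "x \<in> carrier P" "x \<noteq> \<one>" "elliptic P A B x" and y: "y \<in> carrier P" and c: "x \<otimes> y = y \<otimes> x"
  shows "elliptic P A B y"
proof -
  interpret BA: fp P B A by unfold_locales (rule fp_swap)
  obtain p a where pa: "p \<in> carrier P" "a \<in> A \<union> B" "x = cj p a" using x(3) unfolding ell_iff by blast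
  have ac: "a \<in> carrier P" using pa A_car B_car by blast
  have ip: "inv p \<in> carrier P" using pa by simp
  have a1: "a \<noteq> \<one>"
  proof
    assume "a = \<one>" then show False using x pa by simp
  qed
  define y' where "y' = cj (inv p) y"
  have y'c: "y' \<in> carrier P" unfolding y'_def using y ip by simp
  have "cj (inv p) x \<otimes> cj (inv p) y = cj (inv p) y \<otimes> cj (inv p) x" using cj_comm[OF ip x(1) y] c by simp
  then have com: "y' \<otimes> a = a \<otimes> y'" unfolding y'_def using pa ac by simp
  have "y' \<in> A \<union> B"
  proof (cases "a \<in> A")
    case True then show ?thesis using cent_A[OF True a1 y'c com] by simp
  next
    case False then have "a \<in> B" using pa by simp
    then show ?thesis using BA.cent_A[OF _ a1 y'c com] by simp
  qed
  moreover have "y = cj p y'" unfolding y'_def using pa y by simp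
  ultimately show ?thesis unfolding ell_iff using pa by blast
qed

lemma FP2: assumes x: "x \<in> carrier P" "\<not> elliptic P A B x" and yz: "y \<in> carrier P" "z \<in> carrier P"
  and c1: "y \<otimes> x = x \<otimes> y" and c2: "z \<otimes> x = x \<otimes> z"
  shows "y \<otimes> z = z \<otimes> y"
proof -
  obtain w c where w: "w \<in> carrier P" "CR c" "x = cj w c" using nonell[OF x] by blast
  have cc: "c \<in> carrier P" using w CR_car by simp
  have iw: "inv w \<in> carrier P" using w by simp
  have "cj (inv w) y \<in> cent c" using cj_comm[OF iw yz(1) x(1)] c1 w cc yz iw unfolding cent_def by simp
  moreover have "cj (inv w) z \<in> cent c" using cj_comm[OF iw yz(2) x(1)] c2 w cc yz iw unfolding cent_def by simp
  ultimately have "cj (inv w) y \<otimes> cj (inv w) z = cj (inv w) z \<otimes> cj (inv w) y" using cent_abelian[OF w(2)] by blast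
  then show ?thesis using cj_comm[OF iw yz] by simp
qed

lemma FP_conj: assumes w: "w \<in> carrier P" and y: "y \<in> carrier P" and c: "c \<in> carrier P"
  shows "cj (cj (inv w) y) c = cj (inv w) (cj y (cj w c))"
proof -
  have "cj (inv w) (cj y (cj w c)) = cj (inv w) (cj (y \<otimes> w) c)" using w y c by (simp add: cj_cj)
  also have "\<dots> = cj (inv w \<otimes> (y \<otimes> w)) c" using w y c by (simp add: cj_cj)
  also have "inv w \<otimes> (y \<otimes> w) = cj (inv w) y" using w y by (simp add: cj_def m_assoc)
  finally show ?thesis by simp
qed

lemma FP3: assumes x: "x \<in> carrier P" "\<not> elliptic P A B x" and y: "y \<in> carrier P"
  and c1: "cj y x \<otimes> x = x \<otimes> cj y x"
  shows "cj y x = x \<or> cj y x = inv x"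
proof -
  obtain w c where w: "w \<in> carrier P" "CR c" "x = cj w c" using nonell[OF x] by blast
  have cc: "c \<in> carrier P" using w CR_car by simp
  have iw: "inv w \<in> carrier P" using w by simp
  define y' where "y' = cj (inv w) y"
  have y'c: "y' \<in> carrier P" unfolding y'_def using iw y by simp
  have e: "cj y' c = cj (inv w) (cj y x)" unfolding y'_def using FP_conj[OF w(1) y cc] w by simp
  have "cj (inv w) (cj y x) \<otimes> cj (inv w) x = cj (inv w) x \<otimes> cj (inv w) (cj y x)"
    using cj_comm[OF iw _ x(1), of "cj y x"] c1 y x by simp
  then have "cj y' c \<in> cent c" using e w cc y'c y iw x(1) unfolding cent_def by simp
  then have "cj y' c = c \<or> cj y' c = inv c" using cr_P3[OF w(2) y'c] by blast
  then have "cj w (cj y' c) = x \<or> cj w (cj y' c) = inv x" using w cc cj_inv by auto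
  moreover have "cj w (cj y' c) = cj y x" using e w y x by simp
  ultimately show ?thesis by simp
qed

lemma FP4: assumes x: "x \<in> carrier P" "\<not> elliptic P A B x" and y: "y \<in> carrier P"
  and c1: "cj y x = inv x"
  shows "elliptic P A B y \<and> y \<otimes> y = \<one> \<and> (\<forall>z\<in>carrier P. z \<otimes> x = x \<otimes> z \<longrightarrow> cj y z = inv z)"
proof -
  obtain w c where w: "w \<in> carrier P" "CR c" "x = cj w c" using nonell[OF x] by blast
  have cc: "c \<in> carrier P" using w CR_car by simp
  have iw: "inv w \<in> carrier P" using w by simp
  define y' where "y' = cj (inv w) y"
  have y'c: "y' \<in> carrier P" unfolding y'_def using iw y by simp
  have yy': "y = cj w y'" unfolding y'_def using w y by simp
  have e: "cj y' c = cj (inv w) (cj y x)" unfolding y'_def using FP_conj[OF w(1) y cc] w by simp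
  also have "\<dots> = inv c" using c1 w cc cj_inv[OF iw] by simp
  finally have "cj y' c = inv c" .
  then have p4: "y' \<otimes> y' = \<one> \<and> (\<forall>s\<in>cent c. cj y' s = inv s)" using cr_P4[OF w(2) y'c] by blast
  have yy: "y \<otimes> y = \<one>" using p4 yy' w y'c cj_mult[symmetric] by simp
  have zz: "\<forall>z\<in>carrier P. z \<otimes> x = x \<otimes> z \<longrightarrow> cj y z = inv z"
  proof (intro ballI impI)
    fix z assume z: "z \<in> carrier P" and zc: "z \<otimes> x = x \<otimes> z"
    have "cj (inv w) z \<otimes> cj (inv w) x = cj (inv w) x \<otimes> cj (inv w) z" using cj_comm[OF iw z x(1)] zc by simp
    then have "cj (inv w) z \<in> cent c" using w cc z unfolding cent_def by simp
    then have "cj y' (cj (inv w) z) = inv (cj (inv w) z)" using p4 by blast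
    then have "cj w (cj y' (cj (inv w) z)) = cj w (inv (cj (inv w) z))" by simp
    moreover have "cj w (cj y' (cj (inv w) z)) = cj y z" using yy' cj_cj_conj[OF w(1) y'c, of "cj (inv w) z"] w z y'c by simp
    moreover have "cj w (inv (cj (inv w) z)) = inv z" using cj_inv[OF w(1), of "cj (inv w) z"] w z by simp
    ultimately show "cj y z = inv z" by simp
  qed
  have "elliptic P A B y"
  proof (rule ccontr)
    assume "\<not> elliptic P A B y"
    then show False using FP0[OF y] yy by simp
  qed
  then show ?thesis using yy zz by blast
qed

end



context group begin

lemma comm_iff: assumes "x \<in> carrier G" "y \<in> carrier G"
  shows "commutator G x y = \<one> \<longleftrightarrow> x \<otimes> y = y \<otimes> x"
proof -
  have "commutator G x y = (x \<otimes> y) \<otimes> inv (y \<otimes> x)"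
    unfolding commutator_def using assms by (simp add: inv_mult_group m_assoc)
  then show ?thesis using mult_inv_eq_one[of "x \<otimes> y" "y \<otimes> x"] assms by simp
qed

lemma normalizer_iff: assumes "H \<subseteq> carrier G"
  shows "l \<in> normalizer G H \<longleftrightarrow> l \<in> carrier G \<and> l <# H #> inv l = H"
  unfolding normalizer_def stabilizer_def using assms by auto

lemma conjset: assumes "H \<subseteq> carrier G" "l \<in> carrier G"
  shows "l <# H #> inv l = (\<lambda>b. cj l b) ` H"
  unfolding l_coset_def r_coset_def cj_def by auto

end

locale absctx = group +
  fixes E Ab
  assumes E1: "\<one> \<in> E"
  and LA: "\<And>u v. u \<in> carrier G \<Longrightarrow> v \<in> carrier G \<Longrightarrow> u \<noteq> \<one> \<Longrightarrow> v \<noteq> \<one> \<Longrightarrow> u \<otimes> v = v \<otimes> u \<Longrightarrow> u \<notin> E \<Longrightarrow> v \<notin> E"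
  and LB: "\<And>u v w. u \<in> carrier G \<Longrightarrow> v \<in> carrier G \<Longrightarrow> w \<in> carrier G \<Longrightarrow> u \<notin> E \<Longrightarrow> v \<otimes> u = u \<otimes> v \<Longrightarrow> w \<otimes> u = u \<otimes> w \<Longrightarrow> v \<otimes> w = w \<otimes> v"
  and LC: "\<And>u l. u \<in> carrier G \<Longrightarrow> l \<in> carrier G \<Longrightarrow> u \<notin> E \<Longrightarrow> cj l u \<otimes> u = u \<otimes> cj l u \<Longrightarrow> cj l u = u \<or> cj l u = inv u"
  and LD: "\<And>u l. u \<in> carrier G \<Longrightarrow> l \<in> carrier G \<Longrightarrow> u \<notin> E \<Longrightarrow> cj l u = inv u \<Longrightarrow> l \<in> E \<and> l \<otimes> l = \<one> \<and> (\<forall>z\<in>carrier G. z \<otimes> u = u \<otimes> z \<longrightarrow> cj l z = inv z)"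
  and sAb: "subgroup Ab G" and abAb: "abelian_set G Ab" and nt: "Ab \<noteq> {\<one>}" and nE: "\<not> Ab \<subseteq> E"
begin

definition a where "a = (SOME a. a \<in> Ab \<and> a \<notin> E)"

lemma a: "a \<in> Ab" "a \<notin> E" "a \<in> carrier G" "a \<noteq> \<one>"
proof -
  have "\<exists>a. a \<in> Ab \<and> a \<notin> E" using nE by blast
  then have h: "a \<in> Ab \<and> a \<notin> E" unfolding a_def by (rule someI_ex)
  then show "a \<in> Ab" "a \<notin> E" by auto
  show "a \<in> carrier G" using h subgroup.subset[OF sAb] by blast
  show "a \<noteq> \<one>" using h E1 by auto
qed

lemma Ab_car: "Ab \<subseteq> carrier G" using subgroup.subset[OF sAb] .

abbreviation C where "C \<equiv> centralizer G Ab"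
abbreviation N where "N \<equiv> normalizer G Ab"

lemma C_iff: "x \<in> C \<longleftrightarrow> x \<in> carrier G \<and> x \<otimes> a = a \<otimes> x"
proof
  assume "x \<in> C" then show "x \<in> carrier G \<and> x \<otimes> a = a \<otimes> x" using a unfolding centralizer_def by auto
next
  assume h: "x \<in> carrier G \<and> x \<otimes> a = a \<otimes> x"
  have "x \<otimes> b = b \<otimes> x" if b: "b \<in> Ab" for b
  proof -
    have bc: "b \<in> carrier G" using b Ab_car by blast
    have "b \<otimes> a = a \<otimes> b" using abAb b a unfolding abelian_set_def by blast
    then show ?thesis using LB[OF a(3) _ bc a(2), of x] h by simp
  qed
  then show "x \<in> C" using h unfolding centralizer_def by auto
qed

lemma C_car: "x \<in> C \<Longrightarrow> x \<in> carrier G" using C_iff by blast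

lemma C_abelian: "abelian_set G C"
  unfolding abelian_set_def
proof (intro ballI)
  fix x y assume "x \<in> C" "y \<in> C"
  then show "x \<otimes> y = y \<otimes> x" using LB[OF a(3) _ _ a(2), of x y] C_iff by auto
qed

lemma Ab_C: "Ab \<subseteq> C"
  using abAb Ab_car unfolding abelian_set_def centralizer_def by auto

lemma C_sub: "subgroup C G"
proof (rule subgroupI)
  show "C \<subseteq> carrier G" using C_car by blast
  show "C \<noteq> {}" using Ab_C a(1) by blast
next
  fix x assume x: "x \<in> C"
  have xc: "x \<in> carrier G" and e: "x \<otimes> a = a \<otimes> x" using x C_iff by auto
  have "inv x \<otimes> a = inv x \<otimes> (a \<otimes> x) \<otimes> inv x" using xc a by (simp add: m_assoc)
  also have "\<dots> = inv x \<otimes> (x \<otimes> a) \<otimes> inv x" using e by simp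
  also have "\<dots> = a \<otimes> inv x" using xc a by (simp add: m_assoc cancel_simps)
  finally show "inv x \<in> C" using xc C_iff by simp
next
  fix x y assume x: "x \<in> C" and y: "y \<in> C"
  have c: "x \<in> carrier G" "y \<in> carrier G" and e1: "x \<otimes> a = a \<otimes> x" and e2: "y \<otimes> a = a \<otimes> y" using x y C_iff by auto
  have "x \<otimes> y \<otimes> a = x \<otimes> (y \<otimes> a)" using c a by (simp add: m_assoc)
  also have "\<dots> = x \<otimes> (a \<otimes> y)" using e2 by simp
  also have "\<dots> = (x \<otimes> a) \<otimes> y" using c a by (simp add: m_assoc)
  also have "\<dots> = (a \<otimes> x) \<otimes> y" using e1 by simp
  also have "\<dots> = a \<otimes> (x \<otimes> y)" using c a by (simp add: m_assoc)
  finally show "x \<otimes> y \<in> C" using c C_iff by simp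
qed

lemma C_max: "max_abelian_subgroup G C"
  unfolding max_abelian_subgroup_def
proof (intro conjI allI impI)
  show "subgroup C G" by (rule C_sub)
  show "abelian_set G C" by (rule C_abelian)
  fix M' assume h: "subgroup M' G \<and> abelian_set G M' \<and> C \<subseteq> M'"
  have "M' \<subseteq> C"
  proof
    fix m assume m: "m \<in> M'"
    have "m \<in> carrier G" using m h subgroup.subset by blast
    moreover have "m \<otimes> a = a \<otimes> m" using h m Ab_C a(1) unfolding abelian_set_def by blast
    ultimately show "m \<in> C" using C_iff by simp
  qed
  then show "M' = C" using h by blast
qed

lemma C_unique: assumes "max_abelian_subgroup G M" "Ab \<subseteq> M" shows "M = C"
proof -
  have M: "subgroup M G" "abelian_set G M" "\<And>M'. subgroup M' G \<and> abelian_set G M' \<and> M \<subseteq> M' \<Longrightarrow> M' = M"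
    using assms(1) unfolding max_abelian_subgroup_def by auto
  have "M \<subseteq> C"
  proof
    fix m assume m: "m \<in> M"
    have "m \<in> carrier G" using m M subgroup.subset by blast
    moreover have "m \<otimes> a = a \<otimes> m" using M(2) m assms(2) a(1) unfolding abelian_set_def by blast
    ultimately show "m \<in> C" using C_iff by simp
  qed
  then show ?thesis using M(3)[of C] C_sub C_abelian by simp
qed

lemma C_E: "C \<inter> E = {\<one>}"
proof
  show "C \<inter> E \<subseteq> {\<one>}"
  proof
    fix x assume x: "x \<in> C \<inter> E"
    show "x \<in> {\<one>}"
    proof (rule ccontr)
      assume "x \<notin> {\<one>}"
      then have "x \<noteq> \<one>" by simp
      moreover have "x \<in> carrier G" "a \<otimes> x = x \<otimes> a" using x C_iff by auto
      ultimately have "x \<notin> E" using LA[OF a(3) _ a(4)] a(2) by blast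
      then show False using x by blast
    qed
  qed
  show "{\<one>} \<subseteq> C \<inter> E" using E1 C_sub subgroup.one_closed by blast
qed

lemma N_iff: "l \<in> N \<longleftrightarrow> l \<in> carrier G \<and> (\<lambda>b. cj l b) ` Ab = Ab"
  using normalizer_iff[OF Ab_car] conjset[OF Ab_car] by auto

lemma K1: "l \<in> carrier G \<Longrightarrow> cj l a = a \<Longrightarrow> l \<in> C"
  using cj_fix[OF _ a(3)] C_iff by simp

lemma K2: assumes "l \<in> carrier G" "cj l a = inv a" shows "l \<in> E \<and> l \<otimes> l = \<one> \<and> (\<forall>z\<in>C. cj l z = inv z)"
  using LD[OF a(3) assms(1) a(2) assms(2)] C_iff by auto

lemma K3a: assumes "l \<in> C" shows "l \<in> N"
proof -
  have lc: "l \<in> carrier G" using assms C_car by simp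
  have "cj l b = b" if "b \<in> Ab" for b
    using assms that lc Ab_car cj_fix[of l b] unfolding centralizer_def by auto
  then have "(\<lambda>b. cj l b) ` Ab = Ab" by auto
  then show ?thesis using N_iff lc by simp
qed

lemma K3b: assumes lc: "l \<in> carrier G" and inv: "\<forall>z\<in>C. cj l z = inv z" shows "l \<in> N"
proof -
  have e: "cj l b = inv b" if "b \<in> Ab" for b using inv Ab_C that by blast
  have "(\<lambda>b. cj l b) ` Ab = Ab"
  proof
    show "(\<lambda>b. cj l b) ` Ab \<subseteq> Ab" using e subgroup.m_inv_closed[OF sAb] by auto
    show "Ab \<subseteq> (\<lambda>b. cj l b) ` Ab"
    proof
      fix b assume b: "b \<in> Ab"
      have "inv b \<in> Ab" using subgroup.m_inv_closed[OF sAb b] .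
      moreover have "cj l (inv b) = b" using e[OF \<open>inv b \<in> Ab\<close>] b Ab_car by auto
      ultimately show "b \<in> (\<lambda>b. cj l b) ` Ab" by (metis image_eqI)
    qed
  qed
  then show ?thesis using N_iff lc by simp
qed

lemma K4: assumes "l \<in> N" shows "cj l a = a \<or> cj l a = inv a"
proof -
  have lc: "l \<in> carrier G" and im: "(\<lambda>b. cj l b) ` Ab = Ab" using assms N_iff by auto
  have "cj l a \<in> Ab" using im a(1) by blast
  then have "cj l a \<otimes> a = a \<otimes> cj l a" using abAb a(1) unfolding abelian_set_def by blast
  then show ?thesis using LC[OF a(3) lc a(2)] by simp
qed

lemma N_sub: "subgroup N G" using normalizer_imp_subgroup[OF Ab_car] .

lemma C_N: "C \<subseteq> N" using K3a by blast

lemma invert_pair: assumes l: "l \<in> carrier G" "cj l a = inv a" and e: "e \<in> carrier G" "cj e a = inv a"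
  shows "l \<otimes> inv e \<in> C"
proof -
  have ie: "inv e \<in> carrier G" using e by simp
  have "inv a = cj (inv e) (cj e (inv a))" using e a(3) by simp
  also have "cj e (inv a) = a" using e a(3) cj_inv by simp
  finally have "cj (inv e) a = inv a" using e a(3) cj_inv by (metis inv_inv cj_closed inv_closed)
  then have "cj (l \<otimes> inv e) a = cj l (inv a)" using cj_cj[OF l(1) ie a(3)] by simp
  also have "\<dots> = a" using cj_inv[OF l(1) a(3)] l a(3) by simp
  finally show ?thesis using K1 l(1) ie by simp
qed


abbreviation I where "I \<equiv> {C #> g | g. g \<in> N}"

lemma coset_C: "g \<in> C \<Longrightarrow> C #> g = C"
  using subgroup.rcos_const[OF C_sub is_group] by simp

lemma N_cases: "l \<in> N \<Longrightarrow> l \<in> C \<or> (l \<notin> C \<and> cj l a = inv a)"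
  using K4 K1 N_sub subgroup.subset by blast

lemma N_car: "l \<in> N \<Longrightarrow> l \<in> carrier G" using N_sub subgroup.subset by blast

lemma coset_e: assumes g: "g \<in> N" "g \<notin> C" and e: "e \<in> N" "e \<notin> C" shows "C #> g = C #> e"
proof -
  have gc: "g \<in> carrier G" and ec: "e \<in> carrier G" using g e N_car by auto
  have ga: "cj g a = inv a" and ea: "cj e a = inv a" using N_cases g e by auto
  have ge: "g \<otimes> inv e \<in> C" using invert_pair[OF gc ga ec ea] .
  have "C #> g = C #> ((g \<otimes> inv e) \<otimes> e)" using gc ec by (simp add: m_assoc)
  also have "\<dots> = (C #> (g \<otimes> inv e)) #> e"
  proof -
    have Cs: "C \<subseteq> carrier G" using C_car by blast
    show ?thesis using coset_mult_assoc[OF Cs _ ec, of "g \<otimes> inv e"] gc ec by simp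
  qed
  also have "\<dots> = C #> e" using coset_C[OF ge] by simp
  finally show ?thesis .
qed

lemma I_sub: "\<exists>e. I \<subseteq> {C, C #> e}"
proof (cases "\<forall>g\<in>N. g \<in> C")
  case True
  have "I \<subseteq> {C}"
  proof
    fix Z assume "Z \<in> I"
    then obtain g where g: "Z = C #> g" "g \<in> N" by blast
    then show "Z \<in> {C}" using True coset_C by simp
  qed
  then show ?thesis by blast
next
  case False
  then obtain e where e: "e \<in> N" "e \<notin> C" by blast
  have "I \<subseteq> {C, C #> e}"
  proof
    fix Z assume "Z \<in> I"
    then obtain g where g: "Z = C #> g" "g \<in> N" by blast
    show "Z \<in> {C, C #> e}"
    proof (cases "g \<in> C")
      case True then show ?thesis using g coset_C by simp
    next
      case False then show ?thesis using g coset_e[OF g(2) False e] by simp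
    qed
  qed
  then show ?thesis by blast
qed

lemma I_fin: "finite I \<and> card I \<le> 2"
proof -
  obtain e where e: "I \<subseteq> {C, C #> e}" using I_sub by blast
  have "card {C, C #> e} \<le> 2" by (cases "C = C #> e") auto
  moreover have "card I \<le> card {C, C #> e}" using e by (intro card_mono) auto
  ultimately show ?thesis using e finite_subset by auto
qed

lemma I_two: assumes "card I = 2"
  shows "\<exists>e\<in>N. e \<in> E \<and> group.ord G e = 2 \<and> generate G (C \<union> {e}) = N \<and> (\<forall>c\<in>C. e \<otimes> c \<otimes> inv e = inv c)"
proof -
  have "\<not> (\<forall>g\<in>N. g \<in> C)"
  proof
    assume all: "\<forall>g\<in>N. g \<in> C"
    have "I \<subseteq> {C}"
    proof
      fix Z assume "Z \<in> I"
      then obtain g where g: "Z = C #> g" "g \<in> N" by blast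
      then show "Z \<in> {C}" using all coset_C by simp
    qed
    then have "card I \<le> card {C}" by (intro card_mono) auto
    then show False using assms by simp
  qed
  then obtain e where e: "e \<in> N" "e \<notin> C" by blast
  have ec: "e \<in> carrier G" using e N_car by simp
  have ea: "cj e a = inv a" using N_cases e by auto
  have k2: "e \<in> E" "e \<otimes> e = \<one>" "\<forall>z\<in>C. cj e z = inv z" using K2[OF ec ea] by auto
  have e1: "e \<noteq> \<one>" using e(2) subgroup.one_closed[OF C_sub] by blast
  have "ord e = 2"
  proof -
    have "e [^] (2::nat) = \<one>" using k2(2) ec by (simp add: numeral_2_eq_2)
    then have d: "ord e dvd 2" using pow_eq_id[OF ec] by simp
    then have "ord e \<le> 2" by (rule dvd_imp_le) simp
    moreover have "ord e \<noteq> 0"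
    proof
      assume "ord e = 0" then show False using d by simp
    qed
    moreover have "ord e \<noteq> 1" using ord_eq_1[OF ec] e1 by simp
    ultimately show ?thesis by linarith
  qed
  moreover have "generate G (C \<union> {e}) = N"
  proof
    have "C \<union> {e} \<subseteq> N" using C_N e(1) by blast
    then show "generate G (C \<union> {e}) \<subseteq> N" using generate_subgroup_incl[OF _ N_sub] by simp
    show "N \<subseteq> generate G (C \<union> {e})"
    proof
      fix l assume l: "l \<in> N"
      show "l \<in> generate G (C \<union> {e})"
      proof (cases "l \<in> C")
        case True then show ?thesis by (intro generate.incl) simp
      next
        case False
        have lc: "l \<in> carrier G" using l N_car by simp
        have "l \<otimes> inv e \<in> C" using invert_pair[OF lc _ ec ea] N_cases l False by auto
        then have "(l \<otimes> inv e) \<otimes> e \<in> generate G (C \<union> {e})"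
          by (intro generate.eng generate.incl) auto
        then show ?thesis using lc ec by (simp add: m_assoc)
      qed
    qed
  qed
  moreover have "\<forall>c\<in>C. e \<otimes> c \<otimes> inv e = inv c" using k2(3) unfolding cj_def .
  ultimately show ?thesis using e k2 by blast
qed

lemma malnormal: assumes l: "l \<in> carrier G - N" shows "(l <# C #> inv l) \<inter> Ab = {\<one>}"
proof -
  have lc: "l \<in> carrier G" using l by simp
  have il: "inv l \<in> carrier G" using lc by simp
  have cs: "l <# C #> inv l = (\<lambda>b. cj l b) ` C" using conjset[OF _ lc] C_car by blast
  have "(\<lambda>b. cj l b) ` C \<inter> Ab \<subseteq> {\<one>}"
  proof
    fix x assume x: "x \<in> (\<lambda>b. cj l b) ` C \<inter> Ab"
    then obtain c where c: "c \<in> C" "x = cj l c" "x \<in> Ab" by blast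
    have cc: "c \<in> carrier G" using c C_car by simp
    have xc: "x \<in> carrier G" using c lc cc by simp
    show "x \<in> {\<one>}"
    proof (rule ccontr)
      assume "x \<notin> {\<one>}"
      then have "c \<noteq> \<one>" using c lc by auto
      then have cE: "c \<notin> E" using C_E c(1) by blast
      have xa: "x \<otimes> a = a \<otimes> x" using abAb c(3) a(1) unfolding abelian_set_def by blast
      define a' where "a' = cj (inv l) a"
      have a'c: "a' \<in> carrier G" unfolding a'_def using il a(3) by simp
      have "cj (inv l) x \<otimes> cj (inv l) a = cj (inv l) a \<otimes> cj (inv l) x" using cj_comm[OF il xc a(3)] xa by simp
      then have ca': "c \<otimes> a' = a' \<otimes> c" unfolding a'_def using c(2) lc cc by simp
      have ca: "a \<otimes> c = c \<otimes> a" using c(1) C_iff by simp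
      have "a \<otimes> a' = a' \<otimes> a" using LB[OF cc a(3) a'c cE ca] ca' by simp
      then have "cj (inv l) a = a \<or> cj (inv l) a = inv a" using LC[OF a(3) il a(2)] unfolding a'_def by simp
      then have "inv l \<in> N"
      proof
        assume "cj (inv l) a = a" then show "inv l \<in> N" using K1[OF il] K3a by blast
      next
        assume "cj (inv l) a = inv a" then show "inv l \<in> N" using K2[OF il] K3b[OF il] by blast
      qed
      then have "inv (inv l) \<in> N" using subgroup.m_inv_closed[OF N_sub] by blast
      then show False using l lc by simp
    qed
  qed
  moreover have "\<one> \<in> (\<lambda>b. cj l b) ` C \<inter> Ab"
  proof -
    have "cj l \<one> \<in> (\<lambda>b. cj l b) ` C" by (rule imageI) (rule subgroup.one_closed[OF C_sub])
    then show ?thesis using lc subgroup.one_closed[OF sAb] by simp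
  qed
  ultimately show ?thesis using cs by blast
qed

end

context group begin

lemma abstract_main:
  fixes E
  assumes E1: "\<one> \<in> E"
  and LA: "\<And>u v. u \<in> carrier G \<Longrightarrow> v \<in> carrier G \<Longrightarrow> u \<noteq> \<one> \<Longrightarrow> v \<noteq> \<one> \<Longrightarrow> u \<otimes> v = v \<otimes> u \<Longrightarrow> u \<notin> E \<Longrightarrow> v \<notin> E"
  and LB: "\<And>u v w. u \<in> carrier G \<Longrightarrow> v \<in> carrier G \<Longrightarrow> w \<in> carrier G \<Longrightarrow> u \<notin> E \<Longrightarrow> v \<otimes> u = u \<otimes> v \<Longrightarrow> w \<otimes> u = u \<otimes> w \<Longrightarrow> v \<otimes> w = w \<otimes> v"
  and LC: "\<And>u l. u \<in> carrier G \<Longrightarrow> l \<in> carrier G \<Longrightarrow> u \<notin> E \<Longrightarrow> cj l u \<otimes> u = u \<otimes> cj l u \<Longrightarrow> cj l u = u \<or> cj l u = inv u"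
  and LD: "\<And>u l. u \<in> carrier G \<Longrightarrow> l \<in> carrier G \<Longrightarrow> u \<notin> E \<Longrightarrow> cj l u = inv u \<Longrightarrow> l \<in> E \<and> l \<otimes> l = \<one> \<and> (\<forall>z\<in>carrier G. z \<otimes> u = u \<otimes> z \<longrightarrow> cj l z = inv z)"
  shows
    "(\<forall>u1\<in>carrier G. \<forall>u2\<in>carrier G. \<forall>u3\<in>carrier G.
        u1 \<noteq> \<one> \<and> u2 \<noteq> \<one> \<and> u3 \<noteq> \<one> \<and>
        (u1 \<notin> E \<or> u2 \<notin> E \<or> u3 \<notin> E) \<and>
        commutator G u1 u2 = \<one> \<and> commutator G u1 u3 = \<one>
        \<longrightarrow> u1 \<notin> E \<and> u2 \<notin> E \<and> u3 \<notin> E \<and> commutator G u2 u3 = \<one>)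
     \<and>
     (\<forall>Ab. subgroup Ab G \<and> abelian_set G Ab \<and> Ab \<noteq> {\<one>} \<and> \<not> Ab \<subseteq> E \<longrightarrow>
        (max_abelian_subgroup G (centralizer G Ab) \<and> Ab \<subseteq> centralizer G Ab \<and>
         (\<forall>M. max_abelian_subgroup G M \<and> Ab \<subseteq> M \<longrightarrow> M = centralizer G Ab) \<and>
         centralizer G Ab \<inter> E = {\<one>})
        \<and>
        (let C = centralizer G Ab; N = normalizer G Ab;
             I = {C #> g | g. g \<in> N} in
          finite I \<and> card I \<le> 2 \<and>
          (\<forall>l \<in> carrier G - N. (l <# C #> inv l) \<inter> Ab = {\<one>}) \<and>
          (card I = 2 \<longrightarrow>
             (\<exists>e\<in>N. e \<in> E \<and> group.ord G e = 2 \<and>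
                generate G (C \<union> {e}) = N \<and>
                (\<forall>c\<in>C. e \<otimes> c \<otimes> inv e = inv c)))))"
proof (intro conjI)
  show "\<forall>u1\<in>carrier G. \<forall>u2\<in>carrier G. \<forall>u3\<in>carrier G.
        u1 \<noteq> \<one> \<and> u2 \<noteq> \<one> \<and> u3 \<noteq> \<one> \<and>
        (u1 \<notin> E \<or> u2 \<notin> E \<or> u3 \<notin> E) \<and>
        commutator G u1 u2 = \<one> \<and> commutator G u1 u3 = \<one>
        \<longrightarrow> u1 \<notin> E \<and> u2 \<notin> E \<and> u3 \<notin> E \<and> commutator G u2 u3 = \<one>"
  proof (intro ballI impI)
    fix u1 u2 u3 assume u: "u1 \<in> carrier G" "u2 \<in> carrier G" "u3 \<in> carrier G"
      and h: "u1 \<noteq> \<one> \<and> u2 \<noteq> \<one> \<and> u3 \<noteq> \<one> \<and> (u1 \<notin> E \<or> u2 \<notin> E \<or> u3 \<notin> E) \<and>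
        commutator G u1 u2 = \<one> \<and> commutator G u1 u3 = \<one>"
    have c12: "u1 \<otimes> u2 = u2 \<otimes> u1" and c13: "u1 \<otimes> u3 = u3 \<otimes> u1" using h comm_iff u by auto
    have n1: "u1 \<notin> E"
    proof -
      consider "u1 \<notin> E" | "u2 \<notin> E" | "u3 \<notin> E" using h by blast
      then show ?thesis
      proof cases
        case 2 then show ?thesis using LA[OF u(2) u(1)] h c12 by simp
      next
        case 3 then show ?thesis using LA[OF u(3) u(1)] h c13 by simp
      qed simp
    qed
    have n2: "u2 \<notin> E" using LA[OF u(1) u(2)] h c12 n1 by simp
    have n3: "u3 \<notin> E" using LA[OF u(1) u(3)] h c13 n1 by simp
    have "u2 \<otimes> u3 = u3 \<otimes> u2" using LB[OF u(1) u(2) u(3) n1] c12 c13 by simp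
    then show "u1 \<notin> E \<and> u2 \<notin> E \<and> u3 \<notin> E \<and> commutator G u2 u3 = \<one>" using n1 n2 n3 comm_iff u by simp
  qed
next
  show "\<forall>Ab. subgroup Ab G \<and> abelian_set G Ab \<and> Ab \<noteq> {\<one>} \<and> \<not> Ab \<subseteq> E \<longrightarrow>
        (max_abelian_subgroup G (centralizer G Ab) \<and> Ab \<subseteq> centralizer G Ab \<and>
         (\<forall>M. max_abelian_subgroup G M \<and> Ab \<subseteq> M \<longrightarrow> M = centralizer G Ab) \<and>
         centralizer G Ab \<inter> E = {\<one>})
        \<and>
        (let C = centralizer G Ab; N = normalizer G Ab;
             I = {C #> g | g. g \<in> N} in
          finite I \<and> card I \<le> 2 \<and>
          (\<forall>l \<in> carrier G - N. (l <# C #> inv l) \<inter> Ab = {\<one>}) \<and>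
          (card I = 2 \<longrightarrow>
             (\<exists>e\<in>N. e \<in> E \<and> group.ord G e = 2 \<and>
                generate G (C \<union> {e}) = N \<and>
                (\<forall>c\<in>C. e \<otimes> c \<otimes> inv e = inv c))))"
  proof (intro allI impI)
    fix Ab assume hA: "subgroup Ab G \<and> abelian_set G Ab \<and> Ab \<noteq> {\<one>} \<and> \<not> Ab \<subseteq> E"
    have ax: "absctx G E Ab"
    proof (intro absctx.intro absctx_axioms.intro)
      show "group G" by (rule is_group)
      show "\<one> \<in> E" by (rule E1)
      show "subgroup Ab G" "abelian_set G Ab" "Ab \<noteq> {\<one>}" "\<not> Ab \<subseteq> E" using hA by auto
    qed (fact LA LB LC LD)+
    interpret X: absctx G E Ab by (rule ax)
    show "(max_abelian_subgroup G (centralizer G Ab) \<and> Ab \<subseteq> centralizer G Ab \<and>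
         (\<forall>M. max_abelian_subgroup G M \<and> Ab \<subseteq> M \<longrightarrow> M = centralizer G Ab) \<and>
         centralizer G Ab \<inter> E = {\<one>})
        \<and>
        (let C = centralizer G Ab; N = normalizer G Ab;
             I = {C #> g | g. g \<in> N} in
          finite I \<and> card I \<le> 2 \<and>
          (\<forall>l \<in> carrier G - N. (l <# C #> inv l) \<inter> Ab = {\<one>}) \<and>
          (card I = 2 \<longrightarrow>
             (\<exists>e\<in>N. e \<in> E \<and> group.ord G e = 2 \<and>
                generate G (C \<union> {e}) = N \<and>
                (\<forall>c\<in>C. e \<otimes> c \<otimes> inv e = inv c))))"
      unfolding Let_def
    proof (intro conjI)
      show "max_abelian_subgroup G (centralizer G Ab)" by (rule X.C_max)
      show "Ab \<subseteq> centralizer G Ab" by (rule X.Ab_C)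
      show "\<forall>M. max_abelian_subgroup G M \<and> Ab \<subseteq> M \<longrightarrow> M = centralizer G Ab" using X.C_unique by blast
      show "centralizer G Ab \<inter> E = {\<one>}" by (rule X.C_E)
      show "finite {centralizer G Ab #> g |g. g \<in> normalizer G Ab}" using X.I_fin by blast
      show "card {centralizer G Ab #> g |g. g \<in> normalizer G Ab} \<le> 2" using X.I_fin by blast
      show "\<forall>l\<in>carrier G - normalizer G Ab. (l <# centralizer G Ab #> inv l) \<inter> Ab = {\<one>}" using X.malnormal by blast
      show "card {centralizer G Ab #> g |g. g \<in> normalizer G Ab} = 2 \<longrightarrow>
        (\<exists>e\<in>normalizer G Ab. e \<in> E \<and> group.ord G e = 2 \<and> generate G (centralizer G Ab \<union> {e}) = normalizer G Ab \<and>
           (\<forall>c\<in>centralizer G Ab. e \<otimes> c \<otimes> inv e = inv c))" using X.I_two by blast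
    qed
  qed
qed

end




lemma ev_ex: "eventually Q sequentially \<Longrightarrow> \<exists>n. Q n"
  unfolding eventually_sequentially by auto

locale limctx = group G for G (structure) +
  fixes P :: "nat \<Rightarrow> ('c, 'k) monoid_scheme" and A B :: "nat \<Rightarrow> 'c set" and h :: "nat \<Rightarrow> 'a \<Rightarrow> 'c"
  assumes conv: "convergent_seq G P A B h"
begin

abbreviation K where "K \<equiv> stable_kernel G P h"

lemma fpn: "fp (P n) (A n) (B n)"
proof -
  have "is_free_product (P n) (A n) (B n)" using conv unfolding convergent_seq_def by auto
  then show ?thesis unfolding fp_def fp_axioms_def using is_free_product_def by auto
qed

lemma grpn: "group (P n)" using fpn fp_def by blast

lemma ghn: "group_hom G (P n) (h n)"
  using conv grpn is_group unfolding convergent_seq_def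
  by (intro group_hom.intro group_hom_axioms.intro) auto

lemma hmult: "x \<in> carrier G \<Longrightarrow> y \<in> carrier G \<Longrightarrow> h n (x \<otimes> y) = h n x \<otimes>\<^bsub>P n\<^esub> h n y"
  using group_hom.hom_mult[OF ghn] by blast
lemma hinv: "x \<in> carrier G \<Longrightarrow> h n (inv x) = inv\<^bsub>P n\<^esub> (h n x)"
  using group_hom.hom_inv[OF ghn] by blast
lemma hone: "h n \<one> = \<one>\<^bsub>P n\<^esub>"
  using group_hom.hom_one[OF ghn] by blast
lemma hcar: "x \<in> carrier G \<Longrightarrow> h n x \<in> carrier (P n)"
  using group_hom.hom_closed[OF ghn] by blast

lemma dich1: "g \<in> carrier G \<Longrightarrow> (\<forall>\<^sub>F n in sequentially. h n g = \<one>\<^bsub>P n\<^esub>) \<or> (\<forall>\<^sub>F n in sequentially. h n g \<noteq> \<one>\<^bsub>P n\<^esub>)"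
  using conv unfolding convergent_seq_def by blast
lemma dich2: "g \<in> carrier G \<Longrightarrow> (\<forall>\<^sub>F n in sequentially. elliptic (P n) (A n) (B n) (h n g)) \<or> (\<forall>\<^sub>F n in sequentially. \<not> elliptic (P n) (A n) (B n) (h n g))"
  using conv unfolding convergent_seq_def by blast

lemma hcj: "x \<in> carrier G \<Longrightarrow> y \<in> carrier G \<Longrightarrow> h n (cj x y) = group.cj (P n) (h n x) (h n y)"
  unfolding cj_def group.cj_def[OF grpn] using hmult hinv by simp

lemma heq_iff: "x \<in> carrier G \<Longrightarrow> y \<in> carrier G \<Longrightarrow> h n (x \<otimes> inv y) = \<one>\<^bsub>P n\<^esub> \<longleftrightarrow> h n x = h n y"
  using group.mult_inv_eq_one[OF grpn[of n], of "h n x" "h n y"] hmult hinv hcar by simp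

lemma dich_eq: assumes "x \<in> carrier G" "y \<in> carrier G"
  shows "(\<forall>\<^sub>F n in sequentially. h n x = h n y) \<or> (\<forall>\<^sub>F n in sequentially. h n x \<noteq> h n y)"
  using dich1[of "x \<otimes> inv y"] assms heq_iff by simp

lemma K_iff: "g \<in> K \<longleftrightarrow> g \<in> carrier G \<and> (\<forall>\<^sub>F n in sequentially. h n g = \<one>\<^bsub>P n\<^esub>)"
  unfolding stable_kernel_def by simp

lemma K_normal: "K \<lhd> G"
proof -
  have sub: "subgroup K G"
  proof (rule subgroupI)
    show "K \<subseteq> carrier G" using K_iff by blast
    have "\<one> \<in> K" using K_iff hone by simp
    then show "K \<noteq> {}" by blast
  next
    fix x assume "x \<in> K"
    then have xc: "x \<in> carrier G" and ev: "\<forall>\<^sub>F n in sequentially. h n x = \<one>\<^bsub>P n\<^esub>" using K_iff by auto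
    have "\<forall>\<^sub>F n in sequentially. h n (inv x) = \<one>\<^bsub>P n\<^esub>"
      using ev by (rule eventually_mono) (simp add: hinv[OF xc] monoid.inv_one[OF group.is_monoid[OF grpn]])
    then show "inv x \<in> K" using K_iff xc by simp
  next
    fix x y assume "x \<in> K" "y \<in> K"
    then have "x \<in> carrier G" "y \<in> carrier G" "\<forall>\<^sub>F n in sequentially. h n x = \<one>\<^bsub>P n\<^esub> \<and> h n y = \<one>\<^bsub>P n\<^esub>"
      using K_iff eventually_conj by auto
    then show "x \<otimes> y \<in> K" using K_iff hmult grpn by (auto elim: eventually_mono simp: group.is_monoid monoid.l_one)
  qed
  have "\<forall>x\<in>carrier G. \<forall>k\<in>K. x \<otimes> k \<otimes> inv x \<in> K"
  proof (intro ballI)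
    fix x k assume x: "x \<in> carrier G" and k: "k \<in> K"
    have kc: "k \<in> carrier G" using k K_iff by blast
    have "\<forall>\<^sub>F n in sequentially. h n (x \<otimes> k \<otimes> inv x) = \<one>\<^bsub>P n\<^esub>"
      using k unfolding K_iff
    proof (elim conjE eventually_mono)
      fix n assume "h n k = \<one>\<^bsub>P n\<^esub>"
      then show "h n (x \<otimes> k \<otimes> inv x) = \<one>\<^bsub>P n\<^esub>"
        using hmult hinv x kc hcar group.r_inv[OF grpn] group.is_monoid[OF grpn] monoid.r_one by (simp add: monoid.r_one[OF group.is_monoid[OF grpn]])
    qed
    then show "x \<otimes> k \<otimes> inv x \<in> K" using K_iff x kc by simp
  qed
  then show ?thesis using normal_inv_iff sub by blast
qed


abbreviation L where "L \<equiv> limit_group G P h"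
abbreviation EE where "EE \<equiv> limit_elliptics G P A B h"

lemma subK: "subgroup K G" using K_normal normal_imp_subgroup by blast
lemma Kcar: "K \<subseteq> carrier G" using subgroup.subset[OF subK] .

lemma L_group: "group L" unfolding limit_group_def using normal.factorgroup_is_group[OF K_normal] .

definition eta where "eta a = K #> a"

lemma L_car: "carrier L = eta ` carrier G"
  unfolding limit_group_def eta_def using carrier_FactGroup by blast

lemma eta_car: "a \<in> carrier G \<Longrightarrow> eta a \<in> carrier L" using L_car by blast

lemma L_mult: "a \<in> carrier G \<Longrightarrow> b \<in> carrier G \<Longrightarrow> eta a \<otimes>\<^bsub>L\<^esub> eta b = eta (a \<otimes> b)"
  unfolding limit_group_def eta_def using normal.rcos_sum[OF K_normal] by simp

lemma L_one: "\<one>\<^bsub>L\<^esub> = eta \<one>"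
  unfolding limit_group_def eta_def using coset_mult_one[OF Kcar] by simp

lemma L_inv: "a \<in> carrier G \<Longrightarrow> inv\<^bsub>L\<^esub> (eta a) = eta (inv a)"
  using normal.inv_FactGroup[OF K_normal, of "eta a"] eta_car[of a] normal.rcos_inv[OF K_normal, of a]
  unfolding limit_group_def eta_def by simp

lemma eta_eq: assumes "a \<in> carrier G" "b \<in> carrier G"
  shows "eta a = eta b \<longleftrightarrow> (\<forall>\<^sub>F n in sequentially. h n a = h n b)"
proof -
  have "eta a = eta b \<longleftrightarrow> a \<in> K #> b"
  proof
    assume "eta a = eta b" then show "a \<in> K #> b" using rcos_self[OF assms(1) subK] unfolding eta_def by simp
  next
    assume "a \<in> K #> b" then show "eta a = eta b" using repr_independence[OF _ assms(2) subK] unfolding eta_def by simp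
  qed
  also have "\<dots> \<longleftrightarrow> a \<otimes> inv b \<in> K" using subgroup.rcos_module[OF subK is_group assms(2,1)] .
  also have "\<dots> \<longleftrightarrow> (\<forall>\<^sub>F n in sequentially. h n a = h n b)" using K_iff heq_iff assms by simp
  finally show ?thesis .
qed

lemma eta_one_iff: "a \<in> carrier G \<Longrightarrow> eta a = \<one>\<^bsub>L\<^esub> \<longleftrightarrow> (\<forall>\<^sub>F n in sequentially. h n a = \<one>\<^bsub>P n\<^esub>)"
  using eta_eq[of a \<one>] L_one hone by simp

lemma E_iff: assumes "a \<in> carrier G"
  shows "eta a \<in> EE \<longleftrightarrow> (\<forall>\<^sub>F n in sequentially. elliptic (P n) (A n) (B n) (h n a))"
proof
  assume "eta a \<in> EE"
  then obtain g where g: "eta a = eta g" "g \<in> carrier G" "\<forall>\<^sub>F n in sequentially. elliptic (P n) (A n) (B n) (h n g)"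
    unfolding limit_elliptics_def eta_def by blast
  then have e1: "\<forall>\<^sub>F n in sequentially. h n a = h n g" using eta_eq assms by simp
  show "\<forall>\<^sub>F n in sequentially. elliptic (P n) (A n) (B n) (h n a)"
    by (rule eventually_elim2[OF e1 g(3)]) simp
next
  assume "\<forall>\<^sub>F n in sequentially. elliptic (P n) (A n) (B n) (h n a)"
  then show "eta a \<in> EE" unfolding limit_elliptics_def eta_def using assms by blast
qed

lemma ne_ev: "a \<in> carrier G \<Longrightarrow> eta a \<noteq> \<one>\<^bsub>L\<^esub> \<Longrightarrow> \<forall>\<^sub>F n in sequentially. h n a \<noteq> \<one>\<^bsub>P n\<^esub>"
  using dich1 eta_one_iff by blast
lemma nE_ev: "a \<in> carrier G \<Longrightarrow> eta a \<notin> EE \<Longrightarrow> \<forall>\<^sub>F n in sequentially. \<not> elliptic (P n) (A n) (B n) (h n a)"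
  using dich2 E_iff by blast

lemma cjL: "a \<in> carrier G \<Longrightarrow> b \<in> carrier G \<Longrightarrow> group.cj L (eta a) (eta b) = eta (cj a b)"
  unfolding group.cj_def[OF L_group] cj_def using L_mult L_inv by simp

lemma ev_comm: assumes "a \<in> carrier G" "b \<in> carrier G"
  shows "eta a \<otimes>\<^bsub>L\<^esub> eta b = eta b \<otimes>\<^bsub>L\<^esub> eta a \<longleftrightarrow>
    (\<forall>\<^sub>F n in sequentially. h n a \<otimes>\<^bsub>P n\<^esub> h n b = h n b \<otimes>\<^bsub>P n\<^esub> h n a)"
  using assms L_mult eta_eq[of "a \<otimes> b" "b \<otimes> a"] hmult by simp

lemma E1: "\<one>\<^bsub>L\<^esub> \<in> EE"
  using E_iff[of \<one>] L_one hone fp.one_ell[OF fpn] by simp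

lemma LA: assumes u: "u \<in> carrier L" and v: "v \<in> carrier L" and nu: "u \<noteq> \<one>\<^bsub>L\<^esub>" and nv: "v \<noteq> \<one>\<^bsub>L\<^esub>"
  and c: "u \<otimes>\<^bsub>L\<^esub> v = v \<otimes>\<^bsub>L\<^esub> u" and uE: "u \<notin> EE" shows "v \<notin> EE"
proof
  assume vE: "v \<in> EE"
  obtain a b where ab: "a \<in> carrier G" "b \<in> carrier G" "u = eta a" "v = eta b" using u v L_car by auto
  have e1: "\<forall>\<^sub>F n in sequentially. h n b \<noteq> \<one>\<^bsub>P n\<^esub>" using ne_ev[OF ab(2)] ab nv by simp
  have e2: "\<forall>\<^sub>F n in sequentially. elliptic (P n) (A n) (B n) (h n b)" using E_iff[OF ab(2)] ab vE by simp
  have e3: "\<forall>\<^sub>F n in sequentially. \<not> elliptic (P n) (A n) (B n) (h n a)" using nE_ev[OF ab(1)] ab uE by simp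
  have e4: "\<forall>\<^sub>F n in sequentially. h n a \<otimes>\<^bsub>P n\<^esub> h n b = h n b \<otimes>\<^bsub>P n\<^esub> h n a" using ev_comm[OF ab(1,2)] ab c by simp
  have "\<forall>\<^sub>F n in sequentially. h n b \<noteq> \<one>\<^bsub>P n\<^esub> \<and> elliptic (P n) (A n) (B n) (h n b) \<and>
        \<not> elliptic (P n) (A n) (B n) (h n a) \<and> h n a \<otimes>\<^bsub>P n\<^esub> h n b = h n b \<otimes>\<^bsub>P n\<^esub> h n a"
    using eventually_conj[OF e1 eventually_conj[OF e2 eventually_conj[OF e3 e4]]] .
  then obtain n where n: "h n b \<noteq> \<one>\<^bsub>P n\<^esub>" "elliptic (P n) (A n) (B n) (h n b)"
        "\<not> elliptic (P n) (A n) (B n) (h n a)" "h n a \<otimes>\<^bsub>P n\<^esub> h n b = h n b \<otimes>\<^bsub>P n\<^esub> h n a"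
    using ev_ex by blast
  have "elliptic (P n) (A n) (B n) (h n a)"
    using fp.FP1[OF fpn hcar[OF ab(2)] n(1) n(2) hcar[OF ab(1)]] n(4) by simp
  then show False using n(3) by simp
qed

lemma LB: assumes u: "u \<in> carrier L" and v: "v \<in> carrier L" and w: "w \<in> carrier L" and uE: "u \<notin> EE"
  and c1: "v \<otimes>\<^bsub>L\<^esub> u = u \<otimes>\<^bsub>L\<^esub> v" and c2: "w \<otimes>\<^bsub>L\<^esub> u = u \<otimes>\<^bsub>L\<^esub> w"
  shows "v \<otimes>\<^bsub>L\<^esub> w = w \<otimes>\<^bsub>L\<^esub> v"
proof -
  obtain a b c where abc: "a \<in> carrier G" "b \<in> carrier G" "c \<in> carrier G" "u = eta a" "v = eta b" "w = eta c"
    using u v w L_car by auto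
  have e1: "\<forall>\<^sub>F n in sequentially. \<not> elliptic (P n) (A n) (B n) (h n a)" using nE_ev[OF abc(1)] abc uE by simp
  have e2: "\<forall>\<^sub>F n in sequentially. h n b \<otimes>\<^bsub>P n\<^esub> h n a = h n a \<otimes>\<^bsub>P n\<^esub> h n b" using ev_comm[OF abc(2,1)] abc c1 by simp
  have e3: "\<forall>\<^sub>F n in sequentially. h n c \<otimes>\<^bsub>P n\<^esub> h n a = h n a \<otimes>\<^bsub>P n\<^esub> h n c" using ev_comm[OF abc(3,1)] abc c2 by simp
  have "\<forall>\<^sub>F n in sequentially. \<not> elliptic (P n) (A n) (B n) (h n a) \<and>
      h n b \<otimes>\<^bsub>P n\<^esub> h n a = h n a \<otimes>\<^bsub>P n\<^esub> h n b \<and> h n c \<otimes>\<^bsub>P n\<^esub> h n a = h n a \<otimes>\<^bsub>P n\<^esub> h n c"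
    using eventually_conj[OF e1 eventually_conj[OF e2 e3]] .
  then have "\<forall>\<^sub>F n in sequentially. h n b \<otimes>\<^bsub>P n\<^esub> h n c = h n c \<otimes>\<^bsub>P n\<^esub> h n b"
    by (rule eventually_mono) (use fp.FP2[OF fpn hcar[OF abc(1)] _ hcar[OF abc(2)] hcar[OF abc(3)]] in blast)
  then show ?thesis using ev_comm[OF abc(2,3)] abc by simp
qed

lemma LC: assumes u: "u \<in> carrier L" and l: "l \<in> carrier L" and uE: "u \<notin> EE"
  and c: "group.cj L l u \<otimes>\<^bsub>L\<^esub> u = u \<otimes>\<^bsub>L\<^esub> group.cj L l u"
  shows "group.cj L l u = u \<or> group.cj L l u = inv\<^bsub>L\<^esub> u"
proof -
  obtain a g where ag: "a \<in> carrier G" "g \<in> carrier G" "u = eta a" "l = eta g" using u l L_car by auto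
  have cg: "cj g a \<in> carrier G" using ag by simp
  have e1: "\<forall>\<^sub>F n in sequentially. \<not> elliptic (P n) (A n) (B n) (h n a)" using nE_ev[OF ag(1)] ag uE by simp
  have e2: "\<forall>\<^sub>F n in sequentially. h n (cj g a) \<otimes>\<^bsub>P n\<^esub> h n a = h n a \<otimes>\<^bsub>P n\<^esub> h n (cj g a)"
    using ev_comm[OF cg ag(1)] ag c cjL by simp
  have "\<forall>\<^sub>F n in sequentially. \<not> elliptic (P n) (A n) (B n) (h n a) \<and>
      h n (cj g a) \<otimes>\<^bsub>P n\<^esub> h n a = h n a \<otimes>\<^bsub>P n\<^esub> h n (cj g a)"
    using eventually_conj[OF e1 e2] .
  then have ev: "\<forall>\<^sub>F n in sequentially. h n (cj g a) = h n a \<or> h n (cj g a) = h n (inv a)"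
  proof (rule eventually_mono)
    fix n assume "\<not> elliptic (P n) (A n) (B n) (h n a) \<and> h n (cj g a) \<otimes>\<^bsub>P n\<^esub> h n a = h n a \<otimes>\<^bsub>P n\<^esub> h n (cj g a)"
    then show "h n (cj g a) = h n a \<or> h n (cj g a) = h n (inv a)"
      using fp.FP3[OF fpn hcar[OF ag(1)] _ hcar[OF ag(2)]] hcj[OF ag(2,1)] hinv[OF ag(1)] by auto
  qed
  consider "\<forall>\<^sub>F n in sequentially. h n (cj g a) = h n a" | "\<forall>\<^sub>F n in sequentially. h n (cj g a) \<noteq> h n a"
    using dich_eq[OF cg ag(1)] by blast
  then show ?thesis
  proof cases
    case 1
    then have "eta (cj g a) = eta a" using eta_eq[OF cg ag(1)] by simp
    then show ?thesis using cjL ag by simp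
  next
    case 2
    have "\<forall>\<^sub>F n in sequentially. h n (cj g a) = h n (inv a)" by (rule eventually_elim2[OF 2 ev]) auto
    then have "eta (cj g a) = eta (inv a)" using eta_eq[OF cg] ag by simp
    then show ?thesis using cjL ag L_inv by simp
  qed
qed

lemma LD: assumes u: "u \<in> carrier L" and l: "l \<in> carrier L" and uE: "u \<notin> EE"
  and c: "group.cj L l u = inv\<^bsub>L\<^esub> u"
  shows "l \<in> EE \<and> l \<otimes>\<^bsub>L\<^esub> l = \<one>\<^bsub>L\<^esub> \<and> (\<forall>z\<in>carrier L. z \<otimes>\<^bsub>L\<^esub> u = u \<otimes>\<^bsub>L\<^esub> z \<longrightarrow> group.cj L l z = inv\<^bsub>L\<^esub> z)"
proof -
  obtain a g where ag: "a \<in> carrier G" "g \<in> carrier G" "u = eta a" "l = eta g" using u l L_car by auto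
  have cg: "cj g a \<in> carrier G" using ag by simp
  have "eta (cj g a) = eta (inv a)" using c cjL ag L_inv by simp
  then have e2: "\<forall>\<^sub>F n in sequentially. h n (cj g a) = h n (inv a)" using eta_eq[OF cg] ag by simp
  have e1: "\<forall>\<^sub>F n in sequentially. \<not> elliptic (P n) (A n) (B n) (h n a)" using nE_ev[OF ag(1)] ag uE by simp
  have "\<forall>\<^sub>F n in sequentially. \<not> elliptic (P n) (A n) (B n) (h n a) \<and> h n (cj g a) = h n (inv a)"
    using eventually_conj[OF e1 e2] .
  then have ev: "\<forall>\<^sub>F n in sequentially. elliptic (P n) (A n) (B n) (h n g) \<and> h n g \<otimes>\<^bsub>P n\<^esub> h n g = \<one>\<^bsub>P n\<^esub> \<and>
     (\<forall>z\<in>carrier (P n). z \<otimes>\<^bsub>P n\<^esub> h n a = h n a \<otimes>\<^bsub>P n\<^esub> z \<longrightarrow> group.cj (P n) (h n g) z = inv\<^bsub>P n\<^esub> z)"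
  proof (rule eventually_mono)
    fix n assume "\<not> elliptic (P n) (A n) (B n) (h n a) \<and> h n (cj g a) = h n (inv a)"
    then show "elliptic (P n) (A n) (B n) (h n g) \<and> h n g \<otimes>\<^bsub>P n\<^esub> h n g = \<one>\<^bsub>P n\<^esub> \<and>
     (\<forall>z\<in>carrier (P n). z \<otimes>\<^bsub>P n\<^esub> h n a = h n a \<otimes>\<^bsub>P n\<^esub> z \<longrightarrow> group.cj (P n) (h n g) z = inv\<^bsub>P n\<^esub> z)"
      using fp.FP4[OF fpn hcar[OF ag(1)] _ hcar[OF ag(2)]] hcj[OF ag(2,1)] hinv[OF ag(1)] by auto
  qed
  have "\<forall>\<^sub>F n in sequentially. elliptic (P n) (A n) (B n) (h n g)" by (rule eventually_mono[OF ev]) simp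
  then have lE: "l \<in> EE" using E_iff[OF ag(2)] ag by simp
  have "\<forall>\<^sub>F n in sequentially. h n (g \<otimes> g) = \<one>\<^bsub>P n\<^esub>" by (rule eventually_mono[OF ev]) (simp add: hmult[OF ag(2) ag(2)])
  then have ll: "l \<otimes>\<^bsub>L\<^esub> l = \<one>\<^bsub>L\<^esub>" using eta_one_iff L_mult ag by simp
  have "\<forall>z\<in>carrier L. z \<otimes>\<^bsub>L\<^esub> u = u \<otimes>\<^bsub>L\<^esub> z \<longrightarrow> group.cj L l z = inv\<^bsub>L\<^esub> z"
  proof (intro ballI impI)
    fix z assume z: "z \<in> carrier L" and zc: "z \<otimes>\<^bsub>L\<^esub> u = u \<otimes>\<^bsub>L\<^esub> z"
    obtain b where b: "b \<in> carrier G" "z = eta b" using z L_car by auto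
    have cb: "cj g b \<in> carrier G" using ag b by simp
    have eb: "\<forall>\<^sub>F n in sequentially. h n b \<otimes>\<^bsub>P n\<^esub> h n a = h n a \<otimes>\<^bsub>P n\<^esub> h n b"
      using ev_comm[OF b(1) ag(1)] zc b ag by simp
    have "\<forall>\<^sub>F n in sequentially. h n (cj g b) = h n (inv b)"
      by (rule eventually_elim2[OF eb ev]) (use hcj[OF ag(2) b(1)] hinv[OF b(1)] hcar[OF b(1)] in auto)
    then have "eta (cj g b) = eta (inv b)" using eta_eq[OF cb] b by simp
    then show "group.cj L l z = inv\<^bsub>L\<^esub> z" using cjL ag b L_inv by simp
  qed
  then show ?thesis using lE ll by blast
qed

end

theorem lemma4:
  fixes G :: "('a, 'm) monoid_scheme"
    and P :: "nat \<Rightarrow> ('b, 'k) monoid_scheme"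
    and A B :: "nat \<Rightarrow> 'b set"
    and h :: "nat \<Rightarrow> 'a \<Rightarrow> 'b"
    and L :: "'a set monoid" and E :: "'a set set"
  assumes "group G" and "finitely_generated G"
    and "convergent_seq G P A B h"
    and L_def: "L = limit_group G P h"
    and E_def: "E = limit_elliptics G P A B h"
  shows
    "(\<forall>u1\<in>carrier L. \<forall>u2\<in>carrier L. \<forall>u3\<in>carrier L.
        u1 \<noteq> \<one>\<^bsub>L\<^esub> \<and> u2 \<noteq> \<one>\<^bsub>L\<^esub> \<and> u3 \<noteq> \<one>\<^bsub>L\<^esub> \<and>
        (u1 \<notin> E \<or> u2 \<notin> E \<or> u3 \<notin> E) \<and>
        commutator L u1 u2 = \<one>\<^bsub>L\<^esub> \<and> commutator L u1 u3 = \<one>\<^bsub>L\<^esub>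
        \<longrightarrow> u1 \<notin> E \<and> u2 \<notin> E \<and> u3 \<notin> E \<and> commutator L u2 u3 = \<one>\<^bsub>L\<^esub>)
     \<and>
     (\<forall>Ab. subgroup Ab L \<and> abelian_set L Ab \<and> Ab \<noteq> {\<one>\<^bsub>L\<^esub>} \<and> \<not> Ab \<subseteq> E \<longrightarrow>
        (max_abelian_subgroup L (centralizer L Ab) \<and> Ab \<subseteq> centralizer L Ab \<and>
         (\<forall>M. max_abelian_subgroup L M \<and> Ab \<subseteq> M \<longrightarrow> M = centralizer L Ab) \<and>
         centralizer L Ab \<inter> E = {\<one>\<^bsub>L\<^esub>})
        \<and>
        (let C = centralizer L Ab; N = normalizer L Ab;
             I = {C #>\<^bsub>L\<^esub> g | g. g \<in> N} in
          finite I \<and> card I \<le> 2 \<and>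
          (\<forall>l \<in> carrier L - N. (l <#\<^bsub>L\<^esub> C #>\<^bsub>L\<^esub> inv\<^bsub>L\<^esub> l) \<inter> Ab = {\<one>\<^bsub>L\<^esub>}) \<and>
          (card I = 2 \<longrightarrow>
             (\<exists>e\<in>N. e \<in> E \<and> group.ord L e = 2 \<and>
                generate L (C \<union> {e}) = N \<and>
                (\<forall>c\<in>C. e \<otimes>\<^bsub>L\<^esub> c \<otimes>\<^bsub>L\<^esub> inv\<^bsub>L\<^esub> e = inv\<^bsub>L\<^esub> c)))))"
proof -
  have lc: "limctx G P A B h" unfolding limctx_def limctx_axioms_def using assms(1,3) by simp
  interpret X: limctx G P A B h by (rule lc)
  show ?thesis unfolding L_def E_def
    by (rule group.abstract_main[OF X.L_group X.E1 X.LA X.LB X.LC X.LD])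
qed


end
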